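(* Let $(\mathcal A,\mathcal H,D)_\sigma$ be a twisted spectral triple and $e\in M_q(\mathcal A)$ an idempotent with $\sigma(e)=e^*$. Let $\mathcal E=e\mathcal A^q$ with its canonical $\sigma$-translation $\mathcal E^\sigma=\sigma(e)\mathcal A^q$, $\sigma^{\mathcal E}((\xi_j))=(\sigma(\xi_j))$, let $(\cdot,\cdot)_{\mathcal E}$ be a Hermitian metric on $\mathcal E$, and let $\mathfrak s:\mathcal E^\sigma\to\mathcal E$ be the unique $\mathcal A$-linear isomorphism with $(\mathfrak s\eta,\xi)_{\mathcal E}=(\eta,\xi)_0$ for all $\eta\in\mathcal E^\sigma,\xi\in\mathcal E$. Then $\{(\cdot,\cdot)_{\mathcal E},\mathfrak s\}$ is a $\sigma$-Hermitian structure on $\mathcal E$, and the Grassmannian $\sigma$-connection $\nabla_0^{\mathcal E}\xi=\sigma(e)\big(d_\sigma\xi_j\big)_{j=1}^q$ is a $\sigma$-Hermitian $\sigma$-connection on $\mathcal E$.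
   Context: Twisted spectral triple: $\mathbb Z_2$-graded $\mathcal H$, unital involutive algebra $\mathcal A$ closed under holomorphic functional calculus acting by even bounded operators, automorphism $\sigma$ with $\sigma(a)^*=\sigma^{-1}(a^* )$, odd selfadjoint $D$ with compact resolvent, $a(\mathrm{dom}D)\subset\mathrm{dom}D$ and $[D,a]_\sigma=Da-\sigma(a)D$ bounded. $(\xi,\eta)_0=\sum_j\xi_j^*\eta_j$ is the canonical metric on $\mathcal A^q$. $\Omega^1_{D,\sigma}(\mathcal A)=\mathrm{span}\{a[D,b]_\sigma\}$, $d_\sigma a=[D,a]_\sigma$; $\sigma(e)\mathcal A^q\otimes_{\mathcal A}\Omega^1_{D,\sigma}(\mathcal A)$ is identified with $\sigma(e)\Omega^1_{D,\sigma}(\mathcal A)^q$. A $\sigma$-connection is a $\mathbb C$-linear $\nabla:\mathcal E\to\mathcal E^\sigma\otimes_{\mathcal A}\Omega^1_{D,\sigma}(\mathcal A)$ with $\nabla(\xi a)=(\nabla\xi)a+\sigma^{\mathcal E}(\xi)\otimes d_\sigma a$. A Hermitian metric is $(\cdot,\cdot):\mathcal E\times\mathcal E\to\mathcal A$ with $(\xi a,\eta b)=a^*(\xi,\eta)b$, biadditive, positive, nondegenerate. A $\sigma$-Hermitian structure is a Hermitian metric with a right-module isomorphism $\mathfrak s:\mathcal E^\sigma\to\mathcal E$ such that $(\xi_1,\mathfrak s\sigma^{\mathcal E}(\xi_2))=\sigma((\mathfrak s\sigma^{\mathcal E}(\xi_1),\xi_2))$. A $\sigma$-connection is $\sigma$-Hermitian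 if for all $\xi,\eta\in\mathcal E$, writing $\nabla\xi=\sum\xi_\alpha\otimes\omega_\alpha$, $\nabla\eta=\sum\eta_\beta\otimes\psi_\beta$, $\sum_\beta(\xi,\mathfrak s\eta_\beta)\psi_\beta-\sum_\alpha\omega_\alpha^*(\mathfrak s\xi_\alpha,\eta)=d_\sigma\big((\mathfrak s\sigma^{\mathcal E}(\xi),\eta)\big)$. *)

theory Defs
  imports "HOL-Analysis.Analysis" "HOL-Library.Function_Algebras"
begin

text \<open>A complex Hilbert space is a type 'h with a complex scalar multiplication scl and
  an inner product ip (antilinear in the first, linear in the second argument, as for
  the canonical metric on A^q), complete for the induced norm.\<close>

definition hnorm :: "('h \<Rightarrow> 'h \<Rightarrow> complex) \<Rightarrow> 'h \<Rightarrow> real" where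
  "hnorm ip x = sqrt (Re (ip x x))"

definition chilbert :: "(complex \<Rightarrow> 'h::ab_group_add \<Rightarrow> 'h) \<Rightarrow> ('h \<Rightarrow> 'h \<Rightarrow> complex) \<Rightarrow> bool" where
  "chilbert scl ip \<longleftrightarrow>
     vector_space scl \<and>
     (\<forall>x y z. ip (x + y) z = ip x z + ip y z) \<and>
     (\<forall>c x y. ip (scl c x) y = cnj c * ip x y) \<and>
     (\<forall>x y. ip y x = cnj (ip x y)) \<and>
     (\<forall>x. Im (ip x x) = 0 \<and> Re (ip x x) \<ge> 0) \<and>
     (\<forall>x. ip x x = 0 \<longrightarrow> x = 0) \<and>
     (\<forall>X. (\<forall>e>0. \<exists>N. \<forall>m\<ge>N. \<forall>n\<ge>N. hnorm ip (X m - X n) < e)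
          \<longrightarrow> (\<exists>L. (\<lambda>n. hnorm ip (X n - L)) \<longlonglongrightarrow> 0))"

definition bounded_op :: "(complex \<Rightarrow> 'h::ab_group_add \<Rightarrow> 'h) \<Rightarrow> ('h \<Rightarrow> 'h \<Rightarrow> complex) \<Rightarrow> ('h \<Rightarrow> 'h) \<Rightarrow> bool" where
  "bounded_op scl ip T \<longleftrightarrow>
     (\<forall>x y. T (x + y) = T x + T y) \<and> (\<forall>c x. T (scl c x) = scl c (T x)) \<and>
     (\<exists>K. \<forall>x. hnorm ip (T x) \<le> K * hnorm ip x)"

definition adj :: "('h \<Rightarrow> 'h \<Rightarrow> complex) \<Rightarrow> ('h \<Rightarrow> 'h) \<Rightarrow> ('h \<Rightarrow> 'h)" where
  "adj ip T = (THE S. \<forall>x y. ip (T x) y = ip x (S y))"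

definition osc :: "(complex \<Rightarrow> 'h \<Rightarrow> 'h) \<Rightarrow> complex \<Rightarrow> ('h \<Rightarrow> 'h) \<Rightarrow> ('h \<Rightarrow> 'h)" where
  "osc scl c T = (\<lambda>x. scl c (T x))"

definition positive_op :: "(complex \<Rightarrow> 'h::ab_group_add \<Rightarrow> 'h) \<Rightarrow> ('h \<Rightarrow> 'h \<Rightarrow> complex) \<Rightarrow> ('h \<Rightarrow> 'h) \<Rightarrow> bool" where
  "positive_op scl ip T \<longleftrightarrow> bounded_op scl ip T \<and>
     (\<forall>x. Im (ip x (T x)) = 0 \<and> Re (ip x (T x)) \<ge> 0)"

definition compact_op :: "(complex \<Rightarrow> 'h::ab_group_add \<Rightarrow> 'h) \<Rightarrow> ('h \<Rightarrow> 'h \<Rightarrow> complex) \<Rightarrow> ('h \<Rightarrow> 'h) \<Rightarrow> bool" where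
  "compact_op scl ip T \<longleftrightarrow> bounded_op scl ip T \<and>
     (\<forall>X M. (\<forall>n. hnorm ip (X n) \<le> M) \<longrightarrow>
        (\<exists>(r::nat \<Rightarrow> nat) L. strict_mono r \<and> (\<lambda>n. hnorm ip (T (X (r n)) - L)) \<longlonglongrightarrow> 0))"

text \<open>The unbounded operator D is given by its domain domD and its action D on domD.
  gam is the grading operator of the Z2-graded Hilbert space.\<close>

definition twisted_spectral_triple ::
  "(complex \<Rightarrow> 'h::ab_group_add \<Rightarrow> 'h) \<Rightarrow> ('h \<Rightarrow> 'h \<Rightarrow> complex) \<Rightarrow> ('h \<Rightarrow> 'h) \<Rightarrow>
   ('h \<Rightarrow> 'h) set \<Rightarrow> (('h \<Rightarrow> 'h) \<Rightarrow> ('h \<Rightarrow> 'h)) \<Rightarrow> 'h set \<Rightarrow> ('h \<Rightarrow> 'h) \<Rightarrow> bool" where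
  "twisted_spectral_triple scl ip gam A sig domD D \<longleftrightarrow>
     chilbert scl ip \<and>
     \<comment> \<open>Z2-grading\<close>
     bounded_op scl ip gam \<and> gam \<circ> gam = id \<and> (\<forall>x y. ip (gam x) y = ip x (gam y)) \<and>
     \<comment> \<open>A: unital involutive algebra of even bounded operators\<close>
     (\<forall>a\<in>A. bounded_op scl ip a \<and> gam \<circ> a = a \<circ> gam) \<and>
     id \<in> A \<and>
     (\<forall>a\<in>A. \<forall>b\<in>A. a + b \<in> A \<and> a \<circ> b \<in> A) \<and>
     (\<forall>c. \<forall>a\<in>A. osc scl c a \<in> A) \<and>
     (\<forall>a\<in>A. adj ip a \<in> A) \<and>
     \<comment> \<open>sigma: algebra automorphism with sigma(a)^* = sigma^{-1}(a^*)\<close>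
     bij_betw sig A A \<and>
     (\<forall>a\<in>A. \<forall>b\<in>A. sig (a + b) = sig a + sig b \<and> sig (a \<circ> b) = sig a \<circ> sig b) \<and>
     (\<forall>c. \<forall>a\<in>A. sig (osc scl c a) = osc scl c (sig a)) \<and>
     sig id = id \<and>
     (\<forall>a\<in>A. adj ip (sig a) = inv_into A sig (adj ip a)) \<and>
     \<comment> \<open>D: odd selfadjoint operator on a dense domain with compact resolvent\<close>
     0 \<in> domD \<and> (\<forall>x\<in>domD. \<forall>y\<in>domD. x + y \<in> domD) \<and> (\<forall>c. \<forall>x\<in>domD. scl c x \<in> domD) \<and>
     (\<forall>x\<in>domD. \<forall>y\<in>domD. D (x + y) = D x + D y) \<and> (\<forall>c. \<forall>x\<in>domD. D (scl c x) = scl c (D x)) \<and>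
     (\<forall>x e. e > 0 \<longrightarrow> (\<exists>y\<in>domD. hnorm ip (x - y) < e)) \<and>
     {y. \<exists>z. \<forall>x\<in>domD. ip (D x) y = ip x z} = domD \<and>
     (\<forall>x\<in>domD. \<forall>y\<in>domD. ip (D x) y = ip x (D y)) \<and>
     (\<forall>x\<in>domD. gam x \<in> domD \<and> D (gam x) = - gam (D x)) \<and>
     (\<exists>R. compact_op scl ip R \<and> (\<forall>x. R x \<in> domD \<and> D (R x) + scl \<i> (R x) = x) \<and>
          (\<forall>x\<in>domD. R (D x + scl \<i> x) = x)) \<and>
     \<comment> \<open>twisted commutators are bounded\<close>
     (\<forall>a\<in>A. a ` domD \<subseteq> domD \<and>
        (\<exists>T. bounded_op scl ip T \<and> (\<forall>x\<in>domD. T x = D (a x) - sig a (D x))))"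

text \<open>d_sigma a = [D,a]_sigma, the (unique) bounded extension of D a - sigma(a) D.\<close>
definition dsig ::
  "(complex \<Rightarrow> 'h::ab_group_add \<Rightarrow> 'h) \<Rightarrow> ('h \<Rightarrow> 'h \<Rightarrow> complex) \<Rightarrow> (('h \<Rightarrow> 'h) \<Rightarrow> ('h \<Rightarrow> 'h)) \<Rightarrow>
   'h set \<Rightarrow> ('h \<Rightarrow> 'h) \<Rightarrow> ('h \<Rightarrow> 'h) \<Rightarrow> ('h \<Rightarrow> 'h)" where
  "dsig scl ip sig domD D a =
     (THE T. bounded_op scl ip T \<and> (\<forall>x\<in>domD. T x = D (a x) - sig a (D x)))"

definition Omega1 ::
  "(complex \<Rightarrow> 'h::ab_group_add \<Rightarrow> 'h) \<Rightarrow> ('h \<Rightarrow> 'h) set \<Rightarrow> (('h \<Rightarrow> 'h) \<Rightarrow> ('h \<Rightarrow> 'h)) \<Rightarrow> ('h \<Rightarrow> 'h) set" where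
  "Omega1 scl A d = {\<omega>. \<exists>ps. (\<forall>(c, a, b)\<in>set ps. a \<in> A \<and> b \<in> A) \<and>
                         \<omega> = sum_list (map (\<lambda>(c, a, b). osc scl c (a \<circ> d b)) ps)}"

text \<open>Vectors are nat-indexed families that vanish at indices \<ge> q; matrices likewise.\<close>

definition vecs :: "nat \<Rightarrow> ('h \<Rightarrow> 'h::zero) set \<Rightarrow> (nat \<Rightarrow> 'h \<Rightarrow> 'h) set" where
  "vecs q S = {\<xi>. (\<forall>j<q. \<xi> j \<in> S) \<and> (\<forall>j\<ge>q. \<xi> j = 0)}"

definition is_mat :: "nat \<Rightarrow> ('h \<Rightarrow> 'h::zero) set \<Rightarrow> (nat \<Rightarrow> nat \<Rightarrow> 'h \<Rightarrow> 'h) \<Rightarrow> bool" where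
  "is_mat q S M \<longleftrightarrow> (\<forall>i j. if i < q \<and> j < q then M i j \<in> S else M i j = 0)"

definition matvec :: "nat \<Rightarrow> (nat \<Rightarrow> nat \<Rightarrow> 'h \<Rightarrow> 'h::comm_monoid_add) \<Rightarrow> (nat \<Rightarrow> 'h \<Rightarrow> 'h) \<Rightarrow> (nat \<Rightarrow> 'h \<Rightarrow> 'h)" where
  "matvec q M \<xi> = (\<lambda>i. if i < q then (\<Sum>j<q. M i j \<circ> \<xi> j) else 0)"

definition matmul :: "nat \<Rightarrow> (nat \<Rightarrow> nat \<Rightarrow> 'h \<Rightarrow> 'h::comm_monoid_add) \<Rightarrow> (nat \<Rightarrow> nat \<Rightarrow> 'h \<Rightarrow> 'h) \<Rightarrow> (nat \<Rightarrow> nat \<Rightarrow> 'h \<Rightarrow> 'h)" where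
  "matmul q M N = (\<lambda>i k. if i < q \<and> k < q then (\<Sum>j<q. M i j \<circ> N j k) else 0)"

definition rmul :: "(nat \<Rightarrow> 'h \<Rightarrow> 'h) \<Rightarrow> ('h \<Rightarrow> 'h) \<Rightarrow> (nat \<Rightarrow> 'h \<Rightarrow> 'h)" where
  "rmul \<xi> a = (\<lambda>j. \<xi> j \<circ> a)"

definition sigvec :: "nat \<Rightarrow> (('h \<Rightarrow> 'h) \<Rightarrow> ('h \<Rightarrow> 'h::zero)) \<Rightarrow> (nat \<Rightarrow> 'h \<Rightarrow> 'h) \<Rightarrow> (nat \<Rightarrow> 'h \<Rightarrow> 'h)" where
  "sigvec q sig \<xi> = (\<lambda>j. if j < q then sig (\<xi> j) else 0)"

definition metric0 :: "nat \<Rightarrow> ('h \<Rightarrow> 'h \<Rightarrow> complex) \<Rightarrow> (nat \<Rightarrow> 'h \<Rightarrow> 'h::comm_monoid_add) \<Rightarrow> (nat \<Rightarrow> 'h \<Rightarrow> 'h) \<Rightarrow> ('h \<Rightarrow> 'h)" where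
  "metric0 q ip \<xi> \<eta> = (\<Sum>j<q. adj ip (\<xi> j) \<circ> \<eta> j)"

definition hermitian_metric ::
  "(complex \<Rightarrow> 'h::ab_group_add \<Rightarrow> 'h) \<Rightarrow> ('h \<Rightarrow> 'h \<Rightarrow> complex) \<Rightarrow> ('h \<Rightarrow> 'h) set \<Rightarrow>
   (nat \<Rightarrow> 'h \<Rightarrow> 'h) set \<Rightarrow> ((nat \<Rightarrow> 'h \<Rightarrow> 'h) \<Rightarrow> (nat \<Rightarrow> 'h \<Rightarrow> 'h) \<Rightarrow> ('h \<Rightarrow> 'h)) \<Rightarrow> bool" where
  "hermitian_metric scl ip A E h \<longleftrightarrow>
     (\<forall>\<xi>\<in>E. \<forall>\<eta>\<in>E. h \<xi> \<eta> \<in> A) \<and>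
     (\<forall>\<xi>\<in>E. \<forall>\<eta>\<in>E. \<forall>a\<in>A. \<forall>b\<in>A. h (rmul \<xi> a) (rmul \<eta> b) = adj ip a \<circ> h \<xi> \<eta> \<circ> b) \<and>
     (\<forall>\<xi>\<in>E. \<forall>\<xi>'\<in>E. \<forall>\<eta>\<in>E. h (\<xi> + \<xi>') \<eta> = h \<xi> \<eta> + h \<xi>' \<eta> \<and> h \<eta> (\<xi> + \<xi>') = h \<eta> \<xi> + h \<eta> \<xi>') \<and>
     (\<forall>\<xi>\<in>E. positive_op scl ip (h \<xi> \<xi>)) \<and>
     (\<forall>\<xi>\<in>E. (\<forall>\<eta>\<in>E. h \<xi> \<eta> = 0) \<longrightarrow> \<xi> = 0)"

definition module_iso ::
  "('h \<Rightarrow> 'h) set \<Rightarrow> (nat \<Rightarrow> 'h \<Rightarrow> 'h::ab_group_add) set \<Rightarrow> (nat \<Rightarrow> 'h \<Rightarrow> 'h) set \<Rightarrow>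
   ((nat \<Rightarrow> 'h \<Rightarrow> 'h) \<Rightarrow> (nat \<Rightarrow> 'h \<Rightarrow> 'h)) \<Rightarrow> bool" where
  "module_iso A E' E s \<longleftrightarrow> bij_betw s E' E \<and>
     (\<forall>\<eta>\<in>E'. \<forall>\<eta>'\<in>E'. s (\<eta> + \<eta>') = s \<eta> + s \<eta>') \<and>
     (\<forall>\<eta>\<in>E'. \<forall>a\<in>A. s (rmul \<eta> a) = rmul (s \<eta>) a)"

definition sigma_hermitian_structure ::
  "(complex \<Rightarrow> 'h::ab_group_add \<Rightarrow> 'h) \<Rightarrow> ('h \<Rightarrow> 'h \<Rightarrow> complex) \<Rightarrow> ('h \<Rightarrow> 'h) set \<Rightarrow>
   (('h \<Rightarrow> 'h) \<Rightarrow> ('h \<Rightarrow> 'h)) \<Rightarrow> (nat \<Rightarrow> 'h \<Rightarrow> 'h) set \<Rightarrow> (nat \<Rightarrow> 'h \<Rightarrow> 'h) set \<Rightarrow>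
   ((nat \<Rightarrow> 'h \<Rightarrow> 'h) \<Rightarrow> (nat \<Rightarrow> 'h \<Rightarrow> 'h)) \<Rightarrow>
   ((nat \<Rightarrow> 'h \<Rightarrow> 'h) \<Rightarrow> (nat \<Rightarrow> 'h \<Rightarrow> 'h) \<Rightarrow> ('h \<Rightarrow> 'h)) \<Rightarrow>
   ((nat \<Rightarrow> 'h \<Rightarrow> 'h) \<Rightarrow> (nat \<Rightarrow> 'h \<Rightarrow> 'h)) \<Rightarrow> bool" where
  "sigma_hermitian_structure scl ip A sig E Esig sigE h s \<longleftrightarrow>
     hermitian_metric scl ip A E h \<and> module_iso A Esig E s \<and>
     (\<forall>\<xi>1\<in>E. \<forall>\<xi>2\<in>E. h \<xi>1 (s (sigE \<xi>2)) = sig (h (s (sigE \<xi>1)) \<xi>2))"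

text \<open>E^sigma (x)_A Omega^1 is identified with sigma(e) Omega^1(A)^q (given as the set T);
  an elementary tensor eta (x) omega corresponds to the vector (eta_j omega)_j.\<close>

definition sigma_connection ::
  "(complex \<Rightarrow> 'h::ab_group_add \<Rightarrow> 'h) \<Rightarrow> ('h \<Rightarrow> 'h) set \<Rightarrow> (('h \<Rightarrow> 'h) \<Rightarrow> ('h \<Rightarrow> 'h)) \<Rightarrow>
   (nat \<Rightarrow> 'h \<Rightarrow> 'h) set \<Rightarrow> (nat \<Rightarrow> 'h \<Rightarrow> 'h) set \<Rightarrow>
   ((nat \<Rightarrow> 'h \<Rightarrow> 'h) \<Rightarrow> (nat \<Rightarrow> 'h \<Rightarrow> 'h)) \<Rightarrow>
   ((nat \<Rightarrow> 'h \<Rightarrow> 'h) \<Rightarrow> (nat \<Rightarrow> 'h \<Rightarrow> 'h)) \<Rightarrow> bool" where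
  "sigma_connection scl A d E T sigE nabla \<longleftrightarrow>
     (\<forall>\<xi>\<in>E. nabla \<xi> \<in> T) \<and>
     (\<forall>\<xi>\<in>E. \<forall>\<eta>\<in>E. nabla (\<xi> + \<eta>) = nabla \<xi> + nabla \<eta>) \<and>
     (\<forall>c. \<forall>\<xi>\<in>E. nabla (\<lambda>j. osc scl c (\<xi> j)) = (\<lambda>j. osc scl c (nabla \<xi> j))) \<and>
     (\<forall>\<xi>\<in>E. \<forall>a\<in>A. nabla (rmul \<xi> a) = rmul (nabla \<xi>) a + (\<lambda>j. sigE \<xi> j \<circ> d a))"

definition decomp ::
  "(nat \<Rightarrow> 'h \<Rightarrow> 'h) set \<Rightarrow> ('h \<Rightarrow> 'h) set \<Rightarrow> (nat \<Rightarrow> 'h \<Rightarrow> 'h::ab_group_add) \<Rightarrow>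
   ((nat \<Rightarrow> 'h \<Rightarrow> 'h) \<times> ('h \<Rightarrow> 'h)) list \<Rightarrow> bool" where
  "decomp Esig Om v ps \<longleftrightarrow> (\<forall>(\<eta>, \<omega>)\<in>set ps. \<eta> \<in> Esig \<and> \<omega> \<in> Om) \<and>
     v = sum_list (map (\<lambda>(\<eta>, \<omega>). rmul \<eta> \<omega>) ps)"

definition sigma_hermitian_connection ::
  "('h \<Rightarrow> 'h \<Rightarrow> complex) \<Rightarrow> (('h \<Rightarrow> 'h) \<Rightarrow> ('h \<Rightarrow> 'h::ab_group_add)) \<Rightarrow> ('h \<Rightarrow> 'h) set \<Rightarrow>
   (nat \<Rightarrow> 'h \<Rightarrow> 'h) set \<Rightarrow> (nat \<Rightarrow> 'h \<Rightarrow> 'h) set \<Rightarrow>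
   ((nat \<Rightarrow> 'h \<Rightarrow> 'h) \<Rightarrow> (nat \<Rightarrow> 'h \<Rightarrow> 'h)) \<Rightarrow>
   ((nat \<Rightarrow> 'h \<Rightarrow> 'h) \<Rightarrow> (nat \<Rightarrow> 'h \<Rightarrow> 'h) \<Rightarrow> ('h \<Rightarrow> 'h)) \<Rightarrow>
   ((nat \<Rightarrow> 'h \<Rightarrow> 'h) \<Rightarrow> (nat \<Rightarrow> 'h \<Rightarrow> 'h)) \<Rightarrow>
   ((nat \<Rightarrow> 'h \<Rightarrow> 'h) \<Rightarrow> (nat \<Rightarrow> 'h \<Rightarrow> 'h)) \<Rightarrow> bool" where
  "sigma_hermitian_connection ip d Om E Esig sigE h s nabla \<longleftrightarrow>
     (\<forall>\<xi>\<in>E. \<forall>\<eta>\<in>E. \<forall>ps qs. decomp Esig Om (nabla \<xi>) ps \<longrightarrow> decomp Esig Om (nabla \<eta>) qs \<longrightarrow>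
        sum_list (map (\<lambda>(\<eta>b, \<psi>). h \<xi> (s \<eta>b) \<circ> \<psi>) qs)
        - sum_list (map (\<lambda>(\<xi>a, \<omega>). adj ip \<omega> \<circ> h (s \<xi>a) \<eta>) ps)
        = d (h (s (sigE \<xi>)) \<eta>))"

end

theory Submission
  imports Defs
begin


lemma fun_sum_apply: "(sum f I) x = (\<Sum>i\<in>I. f i x)"
  by (induction I rule: infinite_finite_induct) auto

lemma fun_sum_list_apply: "(sum_list xs) x = sum_list (map (\<lambda>f. f x) xs)"
  by (induction xs) auto

locale hilb =
  fixes scl :: "complex \<Rightarrow> 'h::ab_group_add \<Rightarrow> 'h" and ip :: "'h \<Rightarrow> 'h \<Rightarrow> complex"
  assumes ch: "chilbert scl ip"
begin

lemma chs_all: "vector_space scl \<and> (\<forall>x y z. ip (x + y) z = ip x z + ip y z) \<and>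
     (\<forall>c x y. ip (scl c x) y = cnj c * ip x y) \<and>
     (\<forall>x y. ip y x = cnj (ip x y)) \<and>
     (\<forall>x. Im (ip x x) = 0 \<and> Re (ip x x) \<ge> 0) \<and>
     (\<forall>x. ip x x = 0 \<longrightarrow> x = 0) \<and>
     (\<forall>X. (\<forall>e>0. \<exists>N. \<forall>m\<ge>N. \<forall>n\<ge>N. hnorm ip (X m - X n) < e)
          \<longrightarrow> (\<exists>L. (\<lambda>n. hnorm ip (X n - L)) \<longlonglongrightarrow> 0))"
  using ch unfolding chilbert_def .

lemmas chs = chs_all[THEN conjunct1] chs_all[THEN conjunct2, THEN conjunct1]
  chs_all[THEN conjunct2, THEN conjunct2, THEN conjunct1]
  chs_all[THEN conjunct2, THEN conjunct2, THEN conjunct2, THEN conjunct1]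
  chs_all[THEN conjunct2, THEN conjunct2, THEN conjunct2, THEN conjunct2, THEN conjunct1]
  chs_all[THEN conjunct2, THEN conjunct2, THEN conjunct2, THEN conjunct2, THEN conjunct2, THEN conjunct1]
  chs_all[THEN conjunct2, THEN conjunct2, THEN conjunct2, THEN conjunct2, THEN conjunct2, THEN conjunct2]

sublocale vector_space scl by (rule chs(1))

abbreviation N where "N x \<equiv> hnorm ip x"

lemma ip_add_left: "ip (x + y) z = ip x z + ip y z" by (rule chs(2)[rule_format])
lemma ip_scl_left: "ip (scl c x) y = cnj c * ip x y" by (rule chs(3)[rule_format])
lemma ip_sym: "ip y x = cnj (ip x y)" by (rule chs(4)[rule_format])
lemma ip_self: "Im (ip x x) = 0" "Re (ip x x) \<ge> 0" using chs(5) by simp_all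
lemma ip_def0: "ip x x = 0 \<Longrightarrow> x = 0" using chs(6) by simp
lemma complete:
  assumes "\<forall>e>0. \<exists>M. \<forall>m\<ge>M. \<forall>n\<ge>M. hnorm ip (X m - X n) < e"
  shows "\<exists>L. (\<lambda>n. hnorm ip (X n - L)) \<longlonglongrightarrow> 0"
proof -
  from chs(7) have "(\<forall>e>0. \<exists>M. \<forall>m\<ge>M. \<forall>n\<ge>M. hnorm ip (X m - X n) < e) \<longrightarrow> (\<exists>L. (\<lambda>n. hnorm ip (X n - L)) \<longlonglongrightarrow> 0)"
    by (rule spec)
  then show ?thesis using assms by (rule mp)
qed

lemma ip_add_right: "ip z (x + y) = ip z x + ip z y"
proof -
  have "ip z (x + y) = cnj (ip (x + y) z)" by (rule ip_sym)
  also have "\<dots> = cnj (ip x z) + cnj (ip y z)" by (simp add: ip_add_left)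
  also have "cnj (ip x z) = ip z x" by (rule ip_sym[symmetric])
  also have "cnj (ip y z) = ip z y" by (rule ip_sym[symmetric])
  finally show ?thesis .
qed
lemma ip_scl_right: "ip y (scl c x) = c * ip y x"
proof -
  have "ip y (scl c x) = cnj (ip (scl c x) y)" by (rule ip_sym)
  also have "\<dots> = c * cnj (ip x y)" by (simp add: ip_scl_left)
  also have "cnj (ip x y) = ip y x" by (rule ip_sym[symmetric])
  finally show ?thesis .
qed
lemma ip_zero_left[simp]: "ip 0 y = 0"
  using ip_add_left[of 0 0 y] by simp
lemma ip_zero_right[simp]: "ip y 0 = 0"
  using ip_add_right[of y 0 0] by simp
lemma ip_minus_left: "ip (- x) y = - ip x y"
  using ip_add_left[of x "-x" y] by (simp add: eq_neg_iff_add_eq_0 add.commute)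
lemma ip_minus_right: "ip y (- x) = - ip y x"
  using ip_add_right[of y x "-x"] by (simp add: eq_neg_iff_add_eq_0 add.commute)
lemma ip_diff_left: "ip (x - z) y = ip x y - ip z y"
  using ip_add_left[of x "-z" y] ip_minus_left[of z y] by simp
lemma ip_diff_right: "ip y (x - z) = ip y x - ip y z"
  using ip_add_right[of y x "-z"] ip_minus_right[of y z] by simp

lemma ip_self_real: "ip x x = complex_of_real (Re (ip x x))"
  using ip_self(1)[of x] by (simp add: complex_eq_iff)

lemma N_sq: "(N x)^2 = Re (ip x x)"
  unfolding hnorm_def using ip_self(2)[of x] by simp
lemma N_ge0: "N x \<ge> 0" unfolding hnorm_def using ip_self(2)[of x] by simp
lemma N_zero[simp]: "N 0 = 0" unfolding hnorm_def by simp
lemma N_eq0: "N x = 0 \<longleftrightarrow> x = 0"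
proof
  assume "N x = 0"
  then have "Re (ip x x) = 0" using N_sq[of x] by simp
  then have "ip x x = 0" using ip_self_real[of x] by simp
  then show "x = 0" by (rule ip_def0)
qed simp
lemma ip_self_N: "ip x x = complex_of_real ((N x)^2)"
  using ip_self_real N_sq by simp

lemma N_scl: "N (scl c x) = cmod c * N x"
proof -
  have "ip (scl c x) (scl c x) = cnj c * c * ip x x" by (simp add: ip_scl_left ip_scl_right)
  also have "cnj c * c = complex_of_real ((cmod c)^2)" by (metis complex_norm_square mult.commute)
  finally have "Re (ip (scl c x) (scl c x)) = (cmod c)^2 * Re (ip x x)"
    using ip_self_real[of x] by (metis Re_complex_of_real of_real_mult)
  then show ?thesis unfolding hnorm_def by (simp add: real_sqrt_mult)
qed

lemma N_minus: "N (- x) = N x"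
  using N_scl[of "-1" x] by simp
lemma N_diff_commute: "N (x - y) = N (y - x)"
  by (metis N_minus minus_diff_eq)

lemma ip_expand: "ip (x + y) (x + y) = ip x x + ip x y + cnj (ip x y) + ip y y"
  by (simp add: ip_add_left ip_add_right ip_sym[of x y])

lemma cauchy_schwarz: "cmod (ip x y) \<le> N x * N y"
proof (cases "y = 0")
  case True then show ?thesis by simp
next
  case False
  define b where "b = Re (ip y y)"
  have b: "b > 0" using False N_eq0[of y] N_sq[of y] N_ge0[of y] b_def
    by (metis less_eq_real_def zero_less_power2)
  define a where "a = ip y x"
  define t where "t = a / complex_of_real b"
  have yy: "ip y y = complex_of_real b" using ip_self_real b_def by simp
  have xy: "ip x y = cnj a" unfolding a_def by (rule ip_sym)
  have 1: "ip (x - scl t y) (x - scl t y) = ip x x - t * cnj a - cnj t * a + cnj t * t * complex_of_real b"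
    by (simp add: ip_diff_left ip_diff_right ip_scl_left ip_scl_right a_def[symmetric] xy yy algebra_simps)
  have aa: "a * cnj a = complex_of_real ((cmod a)^2)" by (rule complex_norm_square[symmetric])
  have h1: "t * cnj a = complex_of_real ((cmod a)^2 / b)"
  proof -
    have "t * cnj a = (a * cnj a) / complex_of_real b" unfolding t_def by simp
    then show ?thesis unfolding aa by simp
  qed
  have h2: "cnj t * a = complex_of_real ((cmod a)^2 / b)"
  proof -
    have "cnj t * a = (a * cnj a) / complex_of_real b" unfolding t_def by (simp add: mult.commute)
    then show ?thesis unfolding aa by simp
  qed
  have h3: "cnj t * t * complex_of_real b = complex_of_real ((cmod a)^2 / b)"
  proof -
    have "cnj t * t * complex_of_real b = (cnj a * a) / complex_of_real b"
      using b unfolding t_def by (simp add: power2_eq_square)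
    also have "cnj a * a = complex_of_real ((cmod a)^2)" by (metis complex_norm_square mult.commute)
    finally show ?thesis by simp
  qed
  have e: "Re (ip (x - scl t y) (x - scl t y)) = Re (ip x x) - (cmod a)^2 / b"
    unfolding 1 h1 h2 h3 by simp
  have "0 \<le> Re (ip (x - scl t y) (x - scl t y))" by (rule ip_self)
  then have "(cmod a)^2 / b \<le> Re (ip x x)" unfolding e by simp
  then have "(cmod a)^2 \<le> Re (ip x x) * b" using b by (simp add: pos_divide_le_eq)
  also have "\<dots> = (N x * N y)^2" using N_sq b_def by (simp add: power_mult_distrib)
  finally have "cmod a \<le> N x * N y"
    using N_ge0 by (meson mult_nonneg_nonneg power2_le_imp_le)
  moreover have "cmod (ip x y) = cmod a" using xy by simp
  ultimately show ?thesis by simp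
qed

lemma N_triangle: "N (x + y) \<le> N x + N y"
proof -
  have "(N (x + y))^2 = Re (ip x x) + 2 * Re (ip x y) + Re (ip y y)"
    using N_sq[of "x+y"] ip_expand[of x y] by simp
  also have "Re (ip x y) \<le> N x * N y"
    using cauchy_schwarz[of x y] complex_Re_le_cmod order_trans by blast
  then have "Re (ip x x) + 2 * Re (ip x y) + Re (ip y y) \<le> (N x + N y)^2"
    using N_sq[of x] N_sq[of y] by (simp add: power2_sum)
  finally show ?thesis using N_ge0 by (meson add_nonneg_nonneg power2_le_imp_le)
qed

lemma N_diff_triangle: "N (x - z) \<le> N (x - y) + N (y - z)"
  using N_triangle[of "x - y" "y - z"] by simp

lemma parallelogram: "(N (x + y))^2 + (N (x - y))^2 = 2 * (N x)^2 + 2 * (N y)^2"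
proof -
  have "ip (x - y) (x - y) = ip x x - ip x y - cnj (ip x y) + ip y y"
    by (simp add: ip_diff_left ip_diff_right ip_sym[of x y])
  then show ?thesis using N_sq ip_expand[of x y]
    by (simp add: N_sq)
qed


lemma ip_expand_scl: "ip (x + scl t v) (x + scl t v) = ip x x + t * ip x v + cnj t * cnj (ip x v) + cnj t * t * ip v v"
  by (simp add: ip_add_left ip_add_right ip_scl_left ip_scl_right ip_sym[of x v] algebra_simps)

lemma orth_from_min:
  assumes min: "\<And>t. N x \<le> N (x + scl t v)"
  shows "ip x v = 0"
proof (rule ccontr)
  assume ne: "ip x v \<noteq> 0"
  define a where "a = ip x v"
  define c where "c = (N v)^2"
  define s where "s = 1 / (c + 1)"
  have c0: "c \<ge> 0" unfolding c_def by simp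
  have s0: "s > 0" unfolding s_def using c0 by simp
  have sc: "s * c < 1" unfolding s_def using c0 by (simp add: field_simps)
  define t where "t = - complex_of_real s * cnj a"
  have A: "cmod a > 0" using ne a_def by simp
  have "(N x)^2 \<le> (N (x + scl t v))^2"
    using min[of t] N_ge0 by (simp add: power_mono)
  also have "(N (x + scl t v))^2 = Re (ip x x) + Re (t * a) + Re (cnj t * cnj a) + Re (cnj t * t) * c"
    unfolding N_sq ip_expand_scl a_def[symmetric] c_def using ip_self_real[of v] N_sq[of v]
    by (metis Re_complex_of_real plus_complex.sel(1) times_complex.sel(1) Im_complex_of_real mult_zero_right diff_zero)
  finally have ineq: "0 \<le> Re (t * a) + Re (cnj t * cnj a) + Re (cnj t * t) * c" using N_sq[of x] by simp
  have aa: "cnj a * a = complex_of_real ((cmod a)^2)" by (metis complex_norm_square mult.commute)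
  have r1: "t * a = - complex_of_real (s * (cmod a)^2)" unfolding t_def using aa by (simp add: mult.assoc)
  have r2: "cnj t * cnj a = - complex_of_real (s * (cmod a)^2)"
    unfolding t_def using aa by (simp add: mult.assoc mult.commute[of a])
  have r3: "cnj t * t = complex_of_real (s^2 * (cmod a)^2)"
    unfolding t_def using aa by (simp add: power2_eq_square algebra_simps)
  have "0 \<le> - 2 * s * (cmod a)^2 + s^2 * (cmod a)^2 * c"
    using ineq unfolding r1 r2 r3 by simp
  then have "2 * s * (cmod a)^2 \<le> s * (cmod a)^2 * (s * c)" by (simp add: power2_eq_square algebra_simps)
  also have "\<dots> < s * (cmod a)^2 * 1" using sc s0 A by (intro mult_strict_left_mono) auto
  finally show False using s0 A by simp
qed

lemma riesz:
  assumes add: "\<And>x y. f (x + y) = f x + f y" and sc: "\<And>c x. f (scl c x) = c * f x"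
    and bd: "\<And>x. cmod (f x) \<le> K * N x"
  shows "\<exists>z. \<forall>x. f x = ip z x"
proof (cases "\<forall>x. f x = 0")
  case True then show ?thesis by (intro exI[of _ 0]) simp
next
  case False
  then obtain x0 where x0: "f x0 \<noteq> 0" by blast
  have f0: "f 0 = 0" using add[of 0 0] by simp
  have fdiff: "f (x - y) = f x - f y" for x y using add[of "x - y" y] by simp
  have Kpos: "K > 0"
  proof -
    have "0 < cmod (f x0)" using x0 by simp
    also have "\<dots> \<le> K * N x0" by (rule bd)
    finally show ?thesis using N_ge0[of x0] by (simp add: zero_less_mult_iff)
  qed
  define S where "S = {r. \<exists>x. f x = 1 \<and> r = N x}"
  define x1 where "x1 = scl (1 / f x0) x0"
  have fx1: "f x1 = 1" unfolding x1_def using sc x0 by simp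
  have Sne: "S \<noteq> {}" unfolding S_def using fx1 by blast
  have Sbdd: "bdd_below S" unfolding S_def bdd_below_def using N_ge0 by blast
  define m where "m = Inf S"
  have m_le: "m \<le> N x" if "f x = 1" for x
    unfolding m_def using Sbdd that by (intro cInf_lower) (auto simp: S_def)
  have invK: "1 / K \<le> N x" if "f x = 1" for x
    using bd[of x] that Kpos by (simp add: field_simps)
  have m_pos: "m > 0"
  proof -
    have "1 / K \<le> m" unfolding m_def using Sne invK by (intro cInf_greatest) (auto simp: S_def)
    then show ?thesis using Kpos by (meson less_le_trans zero_less_divide_1_iff)
  qed
  have ex: "\<exists>x. f x = 1 \<and> N x < m + inverse (real (Suc n))" for n
  proof -
    have "Inf S < m + inverse (real (Suc n))" unfolding m_def by simp
    from cInf_lessD[OF Sne this] show ?thesis unfolding S_def by auto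
  qed
  then obtain X where X: "\<And>n. f (X n) = 1" "\<And>n. N (X n) < m + inverse (real (Suc n))"
    by metis
  have mid: "2 * m \<le> N (X n + X k)" for n k
  proof -
    have "f (scl (1/2) (X n + X k)) = 1" using sc add X(1) by simp
    then have "m \<le> N (scl (1/2) (X n + X k))" by (rule m_le)
    then show ?thesis unfolding N_scl by simp
  qed
  have pbound: "(N (X n - X k))^2 \<le> 2 * (N (X n))^2 + 2 * (N (X k))^2 - 4 * m^2" for n k
  proof -
    have "(2*m)^2 \<le> (N (X n + X k))^2" using mid[of n k] m_pos by (intro power_mono) auto
    then show ?thesis using parallelogram[of "X n" "X k"] by (simp add: power_mult_distrib)
  qed
  have cauchy: "\<forall>e>0. \<exists>M. \<forall>n\<ge>M. \<forall>k\<ge>M. N (X n - X k) < e"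
  proof (intro allI impI)
    fix e :: real assume e: "e > 0"
    define d where "d = min 1 (e^2 / (4 * (2 * m + 1)))"
    have d0: "d > 0" unfolding d_def using e m_pos by simp
    obtain M where M: "inverse (real (Suc M)) < d"
      using reals_Archimedean[OF d0] by blast
    have sm: "inverse (real (Suc n)) < d" if "n \<ge> M" for n
    proof -
      have "inverse (real (Suc n)) \<le> inverse (real (Suc M))" using that by (intro le_imp_inverse_le) auto
      then show ?thesis using M by linarith
    qed
    have "N (X n - X k) < e" if "n \<ge> M" "k \<ge> M" for n k
    proof -
      have b1: "N (X n) < m + d" using X(2)[of n] sm[OF that(1)] by simp
      have b2: "N (X k) < m + d" using X(2)[of k] sm[OF that(2)] by simp
      have "(N (X n))^2 < (m + d)^2" using b1 N_ge0 by (intro power_strict_mono) auto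
      moreover have "(N (X k))^2 < (m + d)^2" using b2 N_ge0 by (intro power_strict_mono) auto
      ultimately have "(N (X n - X k))^2 < 4 * ((m + d)^2 - m^2)" using pbound[of n k] by simp
      also have "\<dots> = 4 * d * (2 * m + d)" by (simp add: power2_eq_square algebra_simps)
      also have "\<dots> \<le> 4 * d * (2 * m + 1)" using d0 unfolding d_def by (intro mult_left_mono) auto
      also have "\<dots> \<le> 4 * (e^2 / (4 * (2 * m + 1))) * (2 * m + 1)"
        using m_pos unfolding d_def by (intro mult_right_mono mult_left_mono) auto
      also have "\<dots> = e^2" using m_pos by (simp add: field_simps)
      finally show ?thesis using e N_ge0 by (meson less_le power2_less_imp_less)
    qed
    then show "\<exists>M. \<forall>n\<ge>M. \<forall>k\<ge>M. N (X n - X k) < e" by blast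
  qed
  then obtain L where L: "(\<lambda>n. N (X n - L)) \<longlonglongrightarrow> 0" using complete[of X] by blast
  have KL: "(\<lambda>n. K * N (X n - L)) \<longlonglongrightarrow> 0" using tendsto_mult_left[OF L, of K] by simp
  have fL: "f L = 1"
  proof -
    have "cmod (1 - f L) \<le> K * N (X n - L)" for n
      using bd[of "X n - L"] fdiff X(1) by simp
    then have "cmod (1 - f L) \<le> 0" by (intro LIMSEQ_le_const[OF KL]) auto
    then show ?thesis by simp
  qed
  have NL: "N L \<le> m"
  proof -
    have lim: "(\<lambda>n. m + inverse (real (Suc n)) + N (X n - L)) \<longlonglongrightarrow> m + 0 + 0"
      by (intro tendsto_add tendsto_const L LIMSEQ_inverse_real_of_nat)
    have "N L \<le> m + inverse (real (Suc n)) + N (X n - L)" for n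
    proof -
      have "N L \<le> N (X n) + N (L - X n)" using N_triangle[of "X n" "L - X n"] by simp
      then show ?thesis using X(2)[of n] N_diff_commute[of L "X n"] by simp
    qed
    then show ?thesis using LIMSEQ_le_const[OF lim] by simp
  qed
  have orth: "ip L v = 0" if "f v = 0" for v
  proof (rule orth_from_min)
    fix t
    have "f (L + scl t v) = 1" using add sc fL that by simp
    then have "m \<le> N (L + scl t v)" by (rule m_le)
    then show "N L \<le> N (L + scl t v)" using NL by simp
  qed
  have L0: "L \<noteq> 0" using fL f0 by auto
  have LL: "ip L L \<noteq> 0" using L0 ip_def0 by blast
  have key: "ip L x = f x * ip L L" for x
  proof -
    have "f (x - scl (f x) L) = 0" using fdiff sc fL by simp
    then have "ip L (x - scl (f x) L) = 0" by (rule orth)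
    then show ?thesis by (simp add: ip_diff_right ip_scl_right)
  qed
  have "f x = ip (scl (inverse (cnj (ip L L))) L) x" for x
    using LL key[of x] by (simp add: ip_scl_left)
  then show ?thesis by blast
qed

definition adjrel :: "('h \<Rightarrow> 'h) \<Rightarrow> ('h \<Rightarrow> 'h) \<Rightarrow> bool" where
  "adjrel T S \<longleftrightarrow> (\<forall>x y. ip (T x) y = ip x (S y))"

definition lin :: "('h \<Rightarrow> 'h) \<Rightarrow> bool" where
  "lin T \<longleftrightarrow> (\<forall>x y. T (x + y) = T x + T y) \<and> (\<forall>c x. T (scl c x) = scl c (T x))"

lemma bounded_lin: "bounded_op scl ip T \<Longrightarrow> lin T"
  unfolding bounded_op_def lin_def by blast

lemma bounded_adj:
  assumes T: "bounded_op scl ip T"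
  shows "\<exists>S. adjrel T S"
proof -
  from T obtain K where K: "\<And>x. N (T x) \<le> K * N x" "\<And>x y. T (x + y) = T x + T y"
     "\<And>c x. T (scl c x) = scl c (T x)"
    unfolding bounded_op_def by blast
  have "\<exists>z. \<forall>x. ip y (T x) = ip z x" for y
  proof (rule riesz[where K = "N y * K"])
    show "ip y (T (x + x')) = ip y (T x) + ip y (T x')" for x x' by (simp add: K(2) ip_add_right)
    show "ip y (T (scl c x)) = c * ip y (T x)" for c x by (simp add: K(3) ip_scl_right)
    show "cmod (ip y (T x)) \<le> N y * K * N x" for x
    proof -
      have "cmod (ip y (T x)) \<le> N y * N (T x)" by (rule cauchy_schwarz)
      also have "\<dots> \<le> N y * (K * N x)" using K(1) N_ge0 by (intro mult_left_mono) auto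
      finally show ?thesis by (simp add: mult.assoc)
    qed
  qed
  then obtain S where S: "\<And>y x. ip y (T x) = ip (S y) x" by metis
  have "adjrel T S" unfolding adjrel_def
  proof (intro allI)
    fix x y
    have "ip (T x) y = cnj (ip y (T x))" by (rule ip_sym)
    also have "\<dots> = cnj (ip (S y) x)" by (simp add: S)
    also have "\<dots> = ip x (S y)" by (rule ip_sym[symmetric])
    finally show "ip (T x) y = ip x (S y)" .
  qed
  then show ?thesis by blast
qed


lemma ip_ext: "(\<And>x. ip x a = ip x b) \<Longrightarrow> a = b"
proof -
  assume h: "\<And>x. ip x a = ip x b"
  have "ip (a - b) (a - b) = 0" using h[of "a - b"] by (simp add: ip_diff_right)
  then have "a - b = 0" by (rule ip_def0)
  then show ?thesis by simp
qed

lemma ip_ext_left: "(\<And>x. ip a x = ip b x) \<Longrightarrow> a = b"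
  by (rule ip_ext) (metis ip_sym)

lemma adjrel_unique: "adjrel T S \<Longrightarrow> adjrel T S' \<Longrightarrow> S = S'"
  unfolding adjrel_def by (intro ext ip_ext) metis

lemma adj_eq: "adjrel T S \<Longrightarrow> adj ip T = S"
  unfolding adj_def using adjrel_unique unfolding adjrel_def[symmetric]
  by (intro the_equality) (auto simp: adjrel_def)

lemma adjrel_adj: "adjrel T S \<Longrightarrow> adjrel T (adj ip T)"
  using adj_eq by simp

lemma adjrel_sym: "adjrel T S \<Longrightarrow> adjrel S T"
  unfolding adjrel_def by (metis ip_sym)

lemma adj_adj: "adjrel T S \<Longrightarrow> adj ip (adj ip T) = T"
  using adj_eq adjrel_sym by metis

lemma adjrel_add: "adjrel T S \<Longrightarrow> adjrel T' S' \<Longrightarrow> adjrel (T + T') (S + S')"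
  unfolding adjrel_def by (simp add: ip_add_left ip_add_right)

lemma adjrel_comp: "adjrel T S \<Longrightarrow> adjrel T' S' \<Longrightarrow> adjrel (T \<circ> T') (S' \<circ> S)"
  unfolding adjrel_def by simp

lemma adjrel_zero: "adjrel 0 0"
  unfolding adjrel_def by simp

lemma adjrel_id: "adjrel id id"
  unfolding adjrel_def by simp

lemma adjrel_uminus: "adjrel T S \<Longrightarrow> adjrel (- T) (- S)"
  unfolding adjrel_def by (simp add: ip_minus_left ip_minus_right)

lemma adjrel_diff: "adjrel T S \<Longrightarrow> adjrel T' S' \<Longrightarrow> adjrel (T - T') (S - S')"
  unfolding adjrel_def by (simp add: ip_diff_left ip_diff_right)

lemma adjrel_osc: "adjrel T S \<Longrightarrow> adjrel (osc scl c T) (osc scl (cnj c) S)"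
  unfolding adjrel_def osc_def by (simp add: ip_scl_left ip_scl_right)

lemma adjrel_sum: "(\<And>i. i \<in> I \<Longrightarrow> adjrel (T i) (S i)) \<Longrightarrow> adjrel (\<Sum>i\<in>I. T i) (\<Sum>i\<in>I. S i)"
  by (induction I rule: infinite_finite_induct) (auto intro: adjrel_add adjrel_zero)

lemma adjrel_sum_list: "(\<And>p. p \<in> set ps \<Longrightarrow> adjrel (T p) (S p)) \<Longrightarrow>
    adjrel (sum_list (map T ps)) (sum_list (map S ps))"
  by (induction ps) (auto intro: adjrel_add adjrel_zero)

lemma adjrel_lin: assumes "adjrel T S" shows "lin S"
  unfolding lin_def
proof (intro conjI allI)
  fix x y show "S (x + y) = S x + S y"
    using assms unfolding adjrel_def by (intro ip_ext) (metis ip_add_right)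
next
  fix c x show "S (scl c x) = scl c (S x)"
    using assms unfolding adjrel_def by (intro ip_ext) (metis ip_scl_right)
qed

lemma adjrel_lin2: "adjrel T S \<Longrightarrow> lin T"
  using adjrel_lin adjrel_sym by blast

lemma lin_zero: "lin T \<Longrightarrow> T 0 = 0"
  unfolding lin_def by (metis add_cancel_right_right)
lemma lin_add: "lin T \<Longrightarrow> T (x + y) = T x + T y" unfolding lin_def by blast
lemma lin_scl: "lin T \<Longrightarrow> T (scl c x) = scl c (T x)" unfolding lin_def by blast
lemma lin_uminus: "lin T \<Longrightarrow> T (- x) = - T x"
  using lin_add[of T x "-x"] lin_zero[of T] by (simp add: eq_neg_iff_add_eq_0 add.commute)
lemma lin_diff: "lin T \<Longrightarrow> T (x - y) = T x - T y"
  using lin_add[of T x "-y"] lin_uminus[of T y] by simp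
lemma lin_comp_add: "lin T \<Longrightarrow> T \<circ> (f + g) = (T \<circ> f) + (T \<circ> g)"
  by (rule ext) (simp add: lin_add)
lemma lin_comp_zero: "lin T \<Longrightarrow> T \<circ> 0 = 0"
  by (rule ext) (simp add: lin_zero)
lemma lin_comp_uminus: "lin T \<Longrightarrow> T \<circ> (- f) = - (T \<circ> f)"
  by (rule ext) (simp add: lin_uminus)
lemma lin_comp_diff: "lin T \<Longrightarrow> T \<circ> (f - g) = (T \<circ> f) - (T \<circ> g)"
  by (rule ext) (simp add: lin_diff)
lemma lin_comp_sum: "lin T \<Longrightarrow> T \<circ> (\<Sum>i\<in>I. f i) = (\<Sum>i\<in>I. T \<circ> f i)"
  by (induction I rule: infinite_finite_induct) (auto simp: lin_comp_add lin_comp_zero)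
lemma lin_comp_sum_list: "lin T \<Longrightarrow> T \<circ> sum_list (map f ps) = sum_list (map (\<lambda>p. T \<circ> f p) ps)"
  by (induction ps) (auto simp: lin_comp_add lin_comp_zero)

lemma comp_add_left: "(f + g) \<circ> h = (f \<circ> h) + (g \<circ> h)" by (rule ext) simp
lemma comp_zero_left: "(0::'h\<Rightarrow>'h) \<circ> h = 0" by (rule ext) simp
lemma comp_uminus_left: "(- f) \<circ> h = - (f \<circ> h)" by (rule ext) simp
lemma comp_diff_left: "(f - g) \<circ> h = (f \<circ> h) - (g \<circ> h)" by (rule ext) simp
lemma comp_sum_left: "(\<Sum>i\<in>I. f i) \<circ> h = (\<Sum>i\<in>I. f i \<circ> h)"
  by (rule ext) (simp add: fun_sum_apply)
lemma comp_sum_list_left: "(sum_list (map f ps)) \<circ> h = sum_list (map (\<lambda>p. f p \<circ> h) ps)"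
  by (rule ext) (simp add: fun_sum_list_apply comp_def)

lemma adj_add: "adjrel T S \<Longrightarrow> adjrel T' S' \<Longrightarrow> adj ip (T + T') = adj ip T + adj ip T'"
  using adj_eq adjrel_add by metis
lemma adj_comp: "adjrel T S \<Longrightarrow> adjrel T' S' \<Longrightarrow> adj ip (T \<circ> T') = adj ip T' \<circ> adj ip T"
  using adj_eq adjrel_comp by metis

lemma bnd_K: "bounded_op scl ip T \<Longrightarrow> \<exists>K\<ge>0. \<forall>x. N (T x) \<le> K * N x"
  unfolding bounded_op_def
proof (elim conjE exE)
  fix K assume K: "\<forall>x. N (T x) \<le> K * N x"
  have "N (T x) \<le> max K 0 * N x" for x
    using K[rule_format, of x] N_ge0[of x] by (meson max.cobounded1 mult_right_mono order_trans)
  then show "\<exists>K\<ge>0. \<forall>x. N (T x) \<le> K * N x" by (intro exI[of _ "max K 0"]) auto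
qed

lemma bnd_intro: "lin T \<Longrightarrow> (\<And>x. N (T x) \<le> K * N x) \<Longrightarrow> bounded_op scl ip T"
  unfolding bounded_op_def lin_def by blast

lemma bnd_add: assumes "bounded_op scl ip T" "bounded_op scl ip T'" shows "bounded_op scl ip (T + T')"
proof -
  obtain K K' where K: "K \<ge> 0" "\<And>x. N (T x) \<le> K * N x" and K': "K' \<ge> 0" "\<And>x. N (T' x) \<le> K' * N x"
    using bnd_K[OF assms(1)] bnd_K[OF assms(2)] by blast
  have l: "lin T" "lin T'" using assms bounded_lin by auto
  show ?thesis
  proof (rule bnd_intro[where K = "K + K'"])
    show "lin (T + T')" using l unfolding lin_def by (simp add: algebra_simps scale_right_distrib)
    show "N ((T + T') x) \<le> (K + K') * N x" for x
      using N_triangle[of "T x" "T' x"] K(2)[of x] K'(2)[of x] by (simp add: algebra_simps)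
  qed
qed

lemma bnd_comp: assumes "bounded_op scl ip T" "bounded_op scl ip T'" shows "bounded_op scl ip (T \<circ> T')"
proof -
  obtain K K' where K: "K \<ge> 0" "\<And>x. N (T x) \<le> K * N x" and K': "K' \<ge> 0" "\<And>x. N (T' x) \<le> K' * N x"
    using bnd_K[OF assms(1)] bnd_K[OF assms(2)] by blast
  have l: "lin T" "lin T'" using assms bounded_lin by auto
  show ?thesis
  proof (rule bnd_intro[where K = "K * K'"])
    show "lin (T \<circ> T')" using l unfolding lin_def by simp
    show "N ((T \<circ> T') x) \<le> (K * K') * N x" for x
    proof -
      have "N (T (T' x)) \<le> K * N (T' x)" by (rule K(2))
      also have "\<dots> \<le> K * (K' * N x)" using K(1) K'(2) by (intro mult_left_mono) auto
      finally show ?thesis by (simp add: mult.assoc)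
    qed
  qed
qed

lemma bnd_osc: assumes "bounded_op scl ip T" shows "bounded_op scl ip (osc scl c T)"
proof -
  obtain K where K: "K \<ge> 0" "\<And>x. N (T x) \<le> K * N x" using bnd_K[OF assms] by blast
  have l: "lin T" using assms bounded_lin by auto
  show ?thesis
  proof (rule bnd_intro[where K = "cmod c * K"])
    show "lin (osc scl c T)" using l unfolding lin_def osc_def
      by (simp add: scale_right_distrib scale_left_commute)
    show "N (osc scl c T x) \<le> (cmod c * K) * N x" for x
      unfolding osc_def N_scl using K(2)[of x] by (simp add: mult.assoc mult_left_mono)
  qed
qed

lemma osc_minus_one: "osc scl (-1) T = - T"
  unfolding osc_def by (rule ext) simp

lemma bnd_uminus: "bounded_op scl ip T \<Longrightarrow> bounded_op scl ip (- T)"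
  using bnd_osc[of T "-1"] osc_minus_one by simp

lemma bnd_diff: "bounded_op scl ip T \<Longrightarrow> bounded_op scl ip T' \<Longrightarrow> bounded_op scl ip (T - T')"
  using bnd_add[of T "- T'"] bnd_uminus by simp

lemma bnd_zero: "bounded_op scl ip 0"
  by (rule bnd_intro[where K = 0]) (auto simp: lin_def)

lemma bnd_id: "bounded_op scl ip id"
  by (rule bnd_intro[where K = 1]) (auto simp: lin_def)

lemma bnd_sum: "(\<And>i. i \<in> I \<Longrightarrow> bounded_op scl ip (T i)) \<Longrightarrow> bounded_op scl ip (\<Sum>i\<in>I. T i)"
  by (induction I rule: infinite_finite_induct) (auto intro: bnd_add bnd_zero)

lemma bnd_sum_list: "(\<And>p. p \<in> set ps \<Longrightarrow> bounded_op scl ip (T p)) \<Longrightarrow> bounded_op scl ip (sum_list (map T ps))"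
  by (induction ps) (auto intro: bnd_add bnd_zero)

lemma bnd_adjrel: "bounded_op scl ip T \<Longrightarrow> adjrel T (adj ip T)"
  using bounded_adj adjrel_adj by blast

lemma polar:
  assumes lT: "lin T" and lU: "lin U" and h: "\<And>x. ip x (U x) = ip (T x) x"
  shows "adjrel T U"
proof -
  define B where "B x y = ip y (U x) - ip (T y) x" for x y
  have B0: "B x x = 0" for x unfolding B_def using h by simp
  have Badd1: "B (x + x') y = B x y + B x' y" for x x' y
    unfolding B_def using lin_add[OF lU] by (simp add: ip_add_right ip_add_left)
  have Badd2: "B x (y + y') = B x y + B x y'" for x y y'
    unfolding B_def using lin_add[OF lT] by (simp add: ip_add_right ip_add_left)
  have Bs1: "B (scl c x) y = c * B x y" for c x y
    unfolding B_def using lin_scl[OF lU] by (simp add: ip_scl_right ip_scl_left algebra_simps)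
  have Bs2: "B x (scl c y) = cnj c * B x y" for c x y
    unfolding B_def using lin_scl[OF lT] by (simp add: ip_scl_right ip_scl_left algebra_simps)
  have "B x y = 0" for x y
  proof -
    have "B y x + B x y = 0"
      using B0[of "x + y"] B0[of x] B0[of y] by (simp add: Badd1 Badd2)
    then have e1: "B x y + B y x = 0" by (simp add: add.commute)
    have "B (x + scl \<i> y) (x + scl \<i> y) = B x x + \<i> * B y x + cnj \<i> * (B x y + \<i> * B y y)"
      by (simp only: Badd1 Badd2 Bs1 Bs2)
    then have "\<i> * B y x + cnj \<i> * B x y = 0" using B0[of "x + scl \<i> y"] B0[of x] B0[of y] by simp
    then have "\<i> * (B y x - B x y) = 0" by (simp add: right_diff_distrib)
    then have "B y x = B x y" by simp
    then have "B x y + B x y = 0" using e1 by simp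
    then have "2 * B x y = 0" by (simp only: mult_2)
    then show ?thesis by simp
  qed
  then show ?thesis unfolding adjrel_def B_def by simp
qed

end

locale tsl =
  fixes scl :: "complex \<Rightarrow> 'h::ab_group_add \<Rightarrow> 'h" and ip gam A sig domD D
  assumes tst: "twisted_spectral_triple scl ip gam A sig domD D"
begin

lemmas tst_all = tst[unfolded twisted_spectral_triple_def]
lemmas t_ch = tst_all[THEN conjunct1]
lemmas t_A = tst_all[THEN conjunct2, THEN conjunct2, THEN conjunct2, THEN conjunct2, THEN conjunct1]
lemmas t_id = tst_all[THEN conjunct2, THEN conjunct2, THEN conjunct2, THEN conjunct2, THEN conjunct2, THEN conjunct1]
lemmas t_cl = tst_all[THEN conjunct2, THEN conjunct2, THEN conjunct2, THEN conjunct2, THEN conjunct2, THEN conjunct2, THEN conjunct1]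
lemmas t_osc = tst_all[THEN conjunct2, THEN conjunct2, THEN conjunct2, THEN conjunct2, THEN conjunct2, THEN conjunct2, THEN conjunct2, THEN conjunct1]
lemmas t_adj = tst_all[THEN conjunct2, THEN conjunct2, THEN conjunct2, THEN conjunct2, THEN conjunct2, THEN conjunct2, THEN conjunct2, THEN conjunct2, THEN conjunct1]
lemmas t_bij = tst_all[THEN conjunct2, THEN conjunct2, THEN conjunct2, THEN conjunct2, THEN conjunct2, THEN conjunct2, THEN conjunct2, THEN conjunct2, THEN conjunct2, THEN conjunct1]
lemmas t_sig = tst_all[THEN conjunct2, THEN conjunct2, THEN conjunct2, THEN conjunct2, THEN conjunct2, THEN conjunct2, THEN conjunct2, THEN conjunct2, THEN conjunct2, THEN conjunct2, THEN conjunct1]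
lemmas t_sigosc = tst_all[THEN conjunct2, THEN conjunct2, THEN conjunct2, THEN conjunct2, THEN conjunct2, THEN conjunct2, THEN conjunct2, THEN conjunct2, THEN conjunct2, THEN conjunct2, THEN conjunct2, THEN conjunct1]
lemmas t_sigid = tst_all[THEN conjunct2, THEN conjunct2, THEN conjunct2, THEN conjunct2, THEN conjunct2, THEN conjunct2, THEN conjunct2, THEN conjunct2, THEN conjunct2, THEN conjunct2, THEN conjunct2, THEN conjunct2, THEN conjunct1]
lemmas t_adjsig = tst_all[THEN conjunct2, THEN conjunct2, THEN conjunct2, THEN conjunct2, THEN conjunct2, THEN conjunct2, THEN conjunct2, THEN conjunct2, THEN conjunct2, THEN conjunct2, THEN conjunct2, THEN conjunct2, THEN conjunct2, THEN conjunct1]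
lemmas t_d0 = tst_all[THEN conjunct2, THEN conjunct2, THEN conjunct2, THEN conjunct2, THEN conjunct2, THEN conjunct2, THEN conjunct2, THEN conjunct2, THEN conjunct2, THEN conjunct2, THEN conjunct2, THEN conjunct2, THEN conjunct2, THEN conjunct2, THEN conjunct1]
lemmas t_dadd = tst_all[THEN conjunct2, THEN conjunct2, THEN conjunct2, THEN conjunct2, THEN conjunct2, THEN conjunct2, THEN conjunct2, THEN conjunct2, THEN conjunct2, THEN conjunct2, THEN conjunct2, THEN conjunct2, THEN conjunct2, THEN conjunct2, THEN conjunct2, THEN conjunct1]
lemmas t_dscl = tst_all[THEN conjunct2, THEN conjunct2, THEN conjunct2, THEN conjunct2, THEN conjunct2, THEN conjunct2, THEN conjunct2, THEN conjunct2, THEN conjunct2, THEN conjunct2, THEN conjunct2, THEN conjunct2, THEN conjunct2, THEN conjunct2, THEN conjunct2, THEN conjunct2, THEN conjunct1]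
lemmas t_Dadd = tst_all[THEN conjunct2, THEN conjunct2, THEN conjunct2, THEN conjunct2, THEN conjunct2, THEN conjunct2, THEN conjunct2, THEN conjunct2, THEN conjunct2, THEN conjunct2, THEN conjunct2, THEN conjunct2, THEN conjunct2, THEN conjunct2, THEN conjunct2, THEN conjunct2, THEN conjunct2, THEN conjunct1]
lemmas t_Dscl = tst_all[THEN conjunct2, THEN conjunct2, THEN conjunct2, THEN conjunct2, THEN conjunct2, THEN conjunct2, THEN conjunct2, THEN conjunct2, THEN conjunct2, THEN conjunct2, THEN conjunct2, THEN conjunct2, THEN conjunct2, THEN conjunct2, THEN conjunct2, THEN conjunct2, THEN conjunct2, THEN conjunct2, THEN conjunct1]
lemmas t_dense = tst_all[THEN conjunct2, THEN conjunct2, THEN conjunct2, THEN conjunct2, THEN conjunct2, THEN conjunct2, THEN conjunct2, THEN conjunct2, THEN conjunct2, THEN conjunct2, THEN conjunct2, THEN conjunct2, THEN conjunct2, THEN conjunct2, THEN conjunct2, THEN conjunct2, THEN conjunct2, THEN conjunct2, THEN conjunct2, THEN conjunct1]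
lemmas t_Dsym = tst_all[THEN conjunct2, THEN conjunct2, THEN conjunct2, THEN conjunct2, THEN conjunct2, THEN conjunct2, THEN conjunct2, THEN conjunct2, THEN conjunct2, THEN conjunct2, THEN conjunct2, THEN conjunct2, THEN conjunct2, THEN conjunct2, THEN conjunct2, THEN conjunct2, THEN conjunct2, THEN conjunct2, THEN conjunct2, THEN conjunct2, THEN conjunct2, THEN conjunct1]
lemmas t_comm = tst_all[THEN conjunct2, THEN conjunct2, THEN conjunct2, THEN conjunct2, THEN conjunct2, THEN conjunct2, THEN conjunct2, THEN conjunct2, THEN conjunct2, THEN conjunct2, THEN conjunct2, THEN conjunct2, THEN conjunct2, THEN conjunct2, THEN conjunct2, THEN conjunct2, THEN conjunct2, THEN conjunct2, THEN conjunct2, THEN conjunct2, THEN conjunct2, THEN conjunct2, THEN conjunct2, THEN conjunct2]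

sublocale hilb scl ip by unfold_locales (rule t_ch)

abbreviation d where "d a \<equiv> dsig scl ip sig domD D a"

lemma A_bnd: "a \<in> A \<Longrightarrow> bounded_op scl ip a" by (rule conjunct1[OF bspec[OF t_A]])
lemma A_lin: "a \<in> A \<Longrightarrow> lin a" using A_bnd bounded_lin by blast
lemma A_add: "a \<in> A \<Longrightarrow> b \<in> A \<Longrightarrow> a + b \<in> A" by (rule conjunct1[OF bspec[OF bspec[OF t_cl]]])
lemma A_comp: "a \<in> A \<Longrightarrow> b \<in> A \<Longrightarrow> a \<circ> b \<in> A" by (rule conjunct2[OF bspec[OF bspec[OF t_cl]]])
lemma A_osc: "a \<in> A \<Longrightarrow> osc scl c a \<in> A" by (rule bspec[OF spec[OF t_osc]])
lemma A_adjA: "a \<in> A \<Longrightarrow> adj ip a \<in> A" by (rule bspec[OF t_adj])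
lemma A_id: "id \<in> A" by (rule t_id)
lemma osc_zero: "osc scl 0 T = 0" unfolding osc_def by (rule ext) simp
lemma A_zero: "0 \<in> A" using A_osc[OF A_id, of 0] osc_zero by simp
lemma A_uminus: "a \<in> A \<Longrightarrow> - a \<in> A" using A_osc[of a "-1"] osc_minus_one by simp
lemma A_diff: "a \<in> A \<Longrightarrow> b \<in> A \<Longrightarrow> a - b \<in> A" using A_add[of a "-b"] A_uminus by simp
lemma A_sum: "(\<And>i. i \<in> I \<Longrightarrow> f i \<in> A) \<Longrightarrow> (\<Sum>i\<in>I. f i) \<in> A"
  by (induction I rule: infinite_finite_induct) (auto intro: A_add A_zero)
lemma A_adjrel: "a \<in> A \<Longrightarrow> adjrel a (adj ip a)" by (rule bnd_adjrel[OF A_bnd])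

lemma sig_in: "a \<in> A \<Longrightarrow> sig a \<in> A" by (rule bij_betw_apply[OF t_bij])
lemma sig_add: "a \<in> A \<Longrightarrow> b \<in> A \<Longrightarrow> sig (a + b) = sig a + sig b" by (rule conjunct1[OF bspec[OF bspec[OF t_sig]]])
lemma sig_comp: "a \<in> A \<Longrightarrow> b \<in> A \<Longrightarrow> sig (a \<circ> b) = sig a \<circ> sig b" by (rule conjunct2[OF bspec[OF bspec[OF t_sig]]])
lemma sig_osc: "a \<in> A \<Longrightarrow> sig (osc scl c a) = osc scl c (sig a)" by (rule bspec[OF spec[OF t_sigosc]])
lemma sig_id: "sig id = id" by (rule t_sigid)
lemma sig_zero: "sig 0 = 0" using sig_add[OF A_zero A_zero] by simp
lemma sig_uminus: "a \<in> A \<Longrightarrow> sig (- a) = - sig a"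
  using sig_osc[of a "-1"] osc_minus_one by simp
lemma sig_sum: "(\<And>i. i \<in> I \<Longrightarrow> f i \<in> A) \<Longrightarrow> sig (\<Sum>i\<in>I. f i) = (\<Sum>i\<in>I. sig (f i))"
proof (induction I rule: infinite_finite_induct)
  case (insert x F)
  have fx: "f x \<in> A" using insert.prems by simp
  have fF: "sum f F \<in> A" using insert.prems by (intro A_sum) simp
  have IH: "sig (sum f F) = (\<Sum>i\<in>F. sig (f i))" using insert.IH insert.prems by simp
  show ?case unfolding sum.insert[OF insert.hyps] sig_add[OF fx fF] IH by (rule refl)
qed (auto simp: sig_zero)
lemma inv_in: "a \<in> A \<Longrightarrow> inv_into A sig a \<in> A"
  using t_bij by (metis bij_betw_def inv_into_into)
lemma sig_inv: "a \<in> A \<Longrightarrow> sig (inv_into A sig a) = a"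
  using t_bij by (metis bij_betw_def f_inv_into_f)
lemma adj_sig_eq: "a \<in> A \<Longrightarrow> adj ip (sig a) = inv_into A sig (adj ip a)" by (rule bspec[OF t_adjsig])
lemma sig_adj_sig: "a \<in> A \<Longrightarrow> sig (adj ip (sig a)) = adj ip a"
  using adj_sig_eq sig_inv A_adjA by simp

lemma A_dom: "a \<in> A \<Longrightarrow> x \<in> domD \<Longrightarrow> a x \<in> domD" by (rule subsetD[OF conjunct1[OF bspec[OF t_comm]] imageI])
lemma dom_add: "x \<in> domD \<Longrightarrow> y \<in> domD \<Longrightarrow> x + y \<in> domD" by (rule bspec[OF bspec[OF t_dadd]])
lemma dom_scl: "x \<in> domD \<Longrightarrow> scl c x \<in> domD" by (rule bspec[OF spec[OF t_dscl]])
lemma D_add: "x \<in> domD \<Longrightarrow> y \<in> domD \<Longrightarrow> D (x + y) = D x + D y" by (rule bspec[OF bspec[OF t_Dadd]])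
lemma D_scl: "x \<in> domD \<Longrightarrow> D (scl c x) = scl c (D x)" by (rule bspec[OF spec[OF t_Dscl]])
lemma D_sym: "x \<in> domD \<Longrightarrow> y \<in> domD \<Longrightarrow> ip (D x) y = ip x (D y)" by (rule bspec[OF bspec[OF t_Dsym]])
lemma D_zero: "D 0 = 0" using D_scl[OF t_d0, of 0] by simp
lemma dense: "e > 0 \<Longrightarrow> \<exists>y\<in>domD. N (x - y) < e" by (rule mp[OF spec[OF spec[OF t_dense]]])

lemma dense_zero:
  assumes add: "\<And>x y. G (x + y) = G x + G y" and bd: "\<And>x. cmod (G x) \<le> C * N x"
    and z: "\<And>x. x \<in> domD \<Longrightarrow> G x = 0"
  shows "G x = 0"
proof -
  define C' where "C' = max C 0"
  have bd': "cmod (G x) \<le> C' * N x" for x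
    using bd[of x] N_ge0[of x] unfolding C'_def by (meson max.cobounded1 mult_right_mono order_trans)
  have C'0: "C' \<ge> 0" unfolding C'_def by simp
  have "cmod (G x) \<le> 0 + e" if e: "e > 0" for e
  proof -
    obtain y where y: "y \<in> domD" "N (x - y) < e / (C' + 1)" using dense[of "e / (C' + 1)"] e C'0 by auto
    have "G x = G (x - y) + G y" using add[of "x - y" y] by simp
    then have "G x = G (x - y)" using z[OF y(1)] by simp
    then have "cmod (G x) \<le> C' * N (x - y)" using bd' by simp
    also have "\<dots> \<le> C' * (e / (C' + 1))" using y(2) C'0 by (intro mult_left_mono) auto
    also have "\<dots> \<le> e" using C'0 e by (simp add: field_simps)
    finally show ?thesis by simp
  qed
  then have "cmod (G x) \<le> 0" by (rule field_le_epsilon)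
  then show ?thesis by simp
qed

lemma bnd_eq_dense:
  assumes T1: "bounded_op scl ip T1" and T2: "bounded_op scl ip T2"
    and agree: "\<And>x. x \<in> domD \<Longrightarrow> T1 x = T2 x"
  shows "T1 = T2"
proof (rule ext)
  fix x
  define T where "T = T1 - T2"
  have bT: "bounded_op scl ip T" unfolding T_def using T1 T2 by (rule bnd_diff)
  obtain K where K: "K \<ge> 0" "\<And>x. N (T x) \<le> K * N x" using bnd_K[OF bT] by blast
  have lT: "lin T" using bT bounded_lin by blast
  define w where "w = T x"
  have "ip w (T x) = 0"
  proof (rule dense_zero[where G = "\<lambda>z. ip w (T z)" and C = "N w * K"])
    show "ip w (T (z + z')) = ip w (T z) + ip w (T z')" for z z' by (simp add: lin_add[OF lT] ip_add_right)
    show "cmod (ip w (T z)) \<le> N w * K * N z" for z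
    proof -
      have "cmod (ip w (T z)) \<le> N w * N (T z)" by (rule cauchy_schwarz)
      also have "\<dots> \<le> N w * (K * N z)" using K N_ge0 by (intro mult_left_mono) auto
      finally show ?thesis by (simp add: mult.assoc)
    qed
    show "ip w (T z) = 0" if "z \<in> domD" for z using agree[OF that] unfolding T_def by simp
  qed
  then have "w = 0" using ip_def0 unfolding w_def by simp
  then show "T1 x = T2 x" unfolding w_def T_def by simp
qed

lemma d_unique:
  assumes "bounded_op scl ip T" "\<And>x. x \<in> domD \<Longrightarrow> T x = D (a x) - sig a (D x)"
  shows "d a = T"
  unfolding dsig_def
proof (rule the_equality)
  show "bounded_op scl ip T \<and> (\<forall>x\<in>domD. T x = D (a x) - sig a (D x))" using assms by blast
  fix T' assume "bounded_op scl ip T' \<and> (\<forall>x\<in>domD. T' x = D (a x) - sig a (D x))"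
  then show "T' = T" using assms by (intro bnd_eq_dense) auto
qed

lemma d_char:
  assumes a: "a \<in> A"
  shows "bounded_op scl ip (d a)" "\<And>x. x \<in> domD \<Longrightarrow> d a x = D (a x) - sig a (D x)"
proof -
  obtain T where T: "bounded_op scl ip T" "\<And>x. x \<in> domD \<Longrightarrow> T x = D (a x) - sig a (D x)"
    using conjunct2[OF bspec[OF t_comm a]] by blast
  have "d a = T" using T by (rule d_unique)
  then show "bounded_op scl ip (d a)" "\<And>x. x \<in> domD \<Longrightarrow> d a x = D (a x) - sig a (D x)" using T by auto
qed

lemma d_lin: "a \<in> A \<Longrightarrow> lin (d a)" using d_char(1) bounded_lin by blast

lemma d_comp:
  assumes a: "a \<in> A" and b: "b \<in> A"
  shows "d (a \<circ> b) = (sig a \<circ> d b) + (d a \<circ> b)"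
proof (rule d_unique)
  show "bounded_op scl ip ((sig a \<circ> d b) + (d a \<circ> b))"
    by (intro bnd_add bnd_comp A_bnd sig_in a b d_char(1))
  fix x assume x: "x \<in> domD"
  have bx: "b x \<in> domD" using A_dom[OF b x] .
  have l: "lin (sig a)" using A_lin[OF sig_in[OF a]] .
  have "((sig a \<circ> d b) + (d a \<circ> b)) x = sig a (D (b x) - sig b (D x)) + (D (a (b x)) - sig a (D (b x)))"
    using d_char(2)[OF b x] d_char(2)[OF a bx] by simp
  also have "\<dots> = D (a (b x)) - sig a (sig b (D x))" using lin_diff[OF l] by simp
  also have "\<dots> = D ((a \<circ> b) x) - sig (a \<circ> b) (D x)" using sig_comp[OF a b] by simp
  finally show "((sig a \<circ> d b) + (d a \<circ> b)) x = D ((a \<circ> b) x) - sig (a \<circ> b) (D x)" .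
qed

lemma d_add:
  assumes a: "a \<in> A" and b: "b \<in> A"
  shows "d (a + b) = d a + d b"
proof (rule d_unique)
  show "bounded_op scl ip (d a + d b)" by (intro bnd_add d_char(1) a b)
  fix x assume x: "x \<in> domD"
  show "(d a + d b) x = D ((a + b) x) - sig (a + b) (D x)"
    using d_char(2)[OF a x] d_char(2)[OF b x] D_add[OF A_dom[OF a x] A_dom[OF b x]] sig_add[OF a b]
    by (simp add: algebra_simps)
qed

lemma d_osc:
  assumes a: "a \<in> A"
  shows "d (osc scl c a) = osc scl c (d a)"
proof (rule d_unique)
  show "bounded_op scl ip (osc scl c (d a))" by (intro bnd_osc d_char(1) a)
  fix x assume x: "x \<in> domD"
  show "osc scl c (d a) x = D (osc scl c a x) - sig (osc scl c a) (D x)"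
    using d_char(2)[OF a x] D_scl[OF A_dom[OF a x]] sig_osc[OF a]
    by (simp add: osc_def scale_right_diff_distrib)
qed

lemma d_zero: "d 0 = 0"
proof (rule d_unique)
  show "bounded_op scl ip 0" by (rule bnd_zero)
  fix x assume "x \<in> domD"
  show "(0::'h\<Rightarrow>'h) x = D ((0::'h\<Rightarrow>'h) x) - sig 0 (D x)" by (simp add: sig_zero D_zero)
qed

lemma d_sum: "(\<And>i. i \<in> I \<Longrightarrow> f i \<in> A) \<Longrightarrow> d (\<Sum>i\<in>I. f i) = (\<Sum>i\<in>I. d (f i))"
proof (induction I rule: infinite_finite_induct)
  case (insert x F)
  have fx: "f x \<in> A" using insert.prems by simp
  have fF: "sum f F \<in> A" using insert.prems by (intro A_sum) simp
  have IH: "d (sum f F) = (\<Sum>i\<in>F. d (f i))" using insert.IH insert.prems by simp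
  show ?case unfolding sum.insert[OF insert.hyps] d_add[OF fx fF] IH by (rule refl)
qed (auto simp: d_zero)

lemma weak_dense:
  assumes T: "bounded_op scl ip T" and S: "bounded_op scl ip S"
    and h: "\<And>x y. x \<in> domD \<Longrightarrow> y \<in> domD \<Longrightarrow> ip (T x) y = ip x (S y)"
  shows "adjrel T S"
proof -
  obtain K where K: "K \<ge> 0" "\<And>x. N (T x) \<le> K * N x" using bnd_K[OF T] by blast
  obtain K' where K': "K' \<ge> 0" "\<And>x. N (S x) \<le> K' * N x" using bnd_K[OF S] by blast
  have lT: "lin T" and lS: "lin S" using T S bounded_lin by auto
  have step1: "ip (T x) y = ip x (S y)" if y: "y \<in> domD" for x y
  proof -
    have "ip (T x) y - ip x (S y) = 0"
    proof (rule dense_zero[where G = "\<lambda>x. ip (T x) y - ip x (S y)" and C = "K * N y + N (S y)"])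
      show "ip (T (x + x')) y - ip (x + x') (S y) = (ip (T x) y - ip x (S y)) + (ip (T x') y - ip x' (S y))" for x x'
        by (simp add: lin_add[OF lT] ip_add_left)
      show "cmod (ip (T x) y - ip x (S y)) \<le> (K * N y + N (S y)) * N x" for x
      proof -
        have "cmod (ip (T x) y - ip x (S y)) \<le> cmod (ip (T x) y) + cmod (ip x (S y))" by (rule norm_triangle_ineq4)
        also have "\<dots> \<le> N (T x) * N y + N x * N (S y)" by (intro add_mono cauchy_schwarz)
        also have "\<dots> \<le> (K * N x) * N y + N x * N (S y)" using K N_ge0 by (intro add_mono mult_right_mono) auto
        finally show ?thesis by (simp add: algebra_simps)
      qed
      show "ip (T x) y - ip x (S y) = 0" if "x \<in> domD" for x using h[OF that y] by simp
    qed
    then show ?thesis by simp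
  qed
  have "ip (T x) y = ip x (S y)" for x y
  proof -
    have "ip (T x) y - ip x (S y) = 0"
    proof (rule dense_zero[where G = "\<lambda>y. ip (T x) y - ip x (S y)" and C = "N (T x) + N x * K'"])
      show "ip (T x) (y + y') - ip x (S (y + y')) = (ip (T x) y - ip x (S y)) + (ip (T x) y' - ip x (S y'))" for y y'
        by (simp add: lin_add[OF lS] ip_add_right)
      show "cmod (ip (T x) y - ip x (S y)) \<le> (N (T x) + N x * K') * N y" for y
      proof -
        have "cmod (ip (T x) y - ip x (S y)) \<le> cmod (ip (T x) y) + cmod (ip x (S y))" by (rule norm_triangle_ineq4)
        also have "\<dots> \<le> N (T x) * N y + N x * N (S y)" by (intro add_mono cauchy_schwarz)
        also have "\<dots> \<le> N (T x) * N y + N x * (K' * N y)" using K' N_ge0 by (intro add_mono mult_left_mono) auto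
        finally show ?thesis by (simp add: algebra_simps)
      qed
      show "ip (T x) y - ip x (S y) = 0" if "y \<in> domD" for y using step1[OF that] by simp
    qed
    then show ?thesis by simp
  qed
  then show ?thesis unfolding adjrel_def by blast
qed

lemma d_adj:
  assumes a: "a \<in> A"
  shows "adjrel (d a) (- d (adj ip (sig a)))"
proof (rule weak_dense)
  define b where "b = adj ip (sig a)"
  have b: "b \<in> A" unfolding b_def by (intro A_adjA sig_in a)
  have sb: "sig b = adj ip a" unfolding b_def by (rule sig_adj_sig[OF a])
  show "bounded_op scl ip (d a)" by (rule d_char(1)[OF a])
  show "bounded_op scl ip (- d (adj ip (sig a)))" using b unfolding b_def by (intro bnd_uminus d_char(1))
  fix x y assume x: "x \<in> domD" and y: "y \<in> domD"
  have r1: "ip (D (a x)) y = ip x (adj ip a (D y))"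
    using D_sym[OF A_dom[OF a x] y] A_adjrel[OF a] unfolding adjrel_def by simp
  have r2: "ip (sig a (D x)) y = ip x (D (b y))"
    using A_adjrel[OF sig_in[OF a]] D_sym[OF x A_dom[OF b y]] unfolding adjrel_def b_def by simp
  have "ip (d a x) y = ip (D (a x)) y - ip (sig a (D x)) y"
    using d_char(2)[OF a x] by (simp add: ip_diff_left)
  also have "\<dots> = ip x (adj ip a (D y) - D (b y))" using r1 r2 by (simp add: ip_diff_right)
  finally have e: "ip (d a x) y = ip x (adj ip a (D y) - D (b y))" .
  have "(- d b) y = adj ip a (D y) - D (b y)" using d_char(2)[OF b y] sb by simp
  then show "ip (d a x) y = ip x ((- d (adj ip (sig a))) y)" using e unfolding b_def by simp
qed

lemma d_adj_eq: "a \<in> A \<Longrightarrow> adj ip (d a) = - d (adj ip (sig a))"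
  using d_adj adj_eq by blast

lemma Omega1_bnd: "\<omega> \<in> Omega1 scl A (d) \<Longrightarrow> bounded_op scl ip \<omega>"
proof -
  assume "\<omega> \<in> Omega1 scl A (d)"
  then obtain ps where ps: "\<forall>(c, a, b)\<in>set ps. a \<in> A \<and> b \<in> A"
    "\<omega> = sum_list (map (\<lambda>(c, a, b). osc scl c (a \<circ> d b)) ps)"
    unfolding Omega1_def by blast
  have "bounded_op scl ip ((\<lambda>(c, a, b). osc scl c (a \<circ> d b)) p)" if "p \<in> set ps" for p
  proof -
    obtain c a b where p: "p = (c, a, b)" by (cases p) auto
    have "a \<in> A" "b \<in> A" using ps(1) that p by auto
    then show ?thesis unfolding p by (auto intro: bnd_osc bnd_comp A_bnd d_char(1))
  qed
  then show ?thesis unfolding ps(2) by (rule bnd_sum_list)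
qed

lemma Omega1_d: "a \<in> A \<Longrightarrow> d a \<in> Omega1 scl A (d)"
  unfolding Omega1_def
proof (intro CollectI exI[of _ "[(1, id, a)]"] conjI)
  show "\<forall>(c, a', b)\<in>set [(1, id, a)]. a' \<in> A \<and> b \<in> A" if "a \<in> A" using that A_id by simp
  show "d a = sum_list (map (\<lambda>(c, a, b). osc scl c (a \<circ> d b)) [(1, id, a)])"
    unfolding osc_def by (simp add: fun_eq_iff)
qed

end


lemma sum_list_sum_swap: "sum_list (map (\<lambda>p. \<Sum>j\<in>J. g p j) ps) = (\<Sum>j\<in>J. sum_list (map (\<lambda>p. g p j) ps))"
  by (induction ps) (auto simp: sum.distrib)

locale gr = tsl +
  fixes q :: nat and e h s
  assumes e_mat: "is_mat q A e"
    and e_idem: "matmul q e e = e"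
    and e_sig: "\<forall>i<q. \<forall>j<q. sig (e i j) = adj ip (e j i)"
    and h_metric: "hermitian_metric scl ip A (matvec q e ` vecs q A) h"
    and s_iso: "module_iso A (matvec q (\<lambda>i j. sig (e i j)) ` vecs q A) (matvec q e ` vecs q A) s"
    and s_prop: "\<forall>\<eta>\<in>matvec q (\<lambda>i j. sig (e i j)) ` vecs q A. \<forall>\<xi>\<in>matvec q e ` vecs q A. h (s \<eta>) \<xi> = metric0 q ip \<eta> \<xi>"
begin

abbreviation "E \<equiv> matvec q e ` vecs q A"
abbreviation "se \<equiv> (\<lambda>i j. sig (e i j))"
abbreviation "Esig \<equiv> matvec q se ` vecs q A"

lemma e_cases: "if i < q \<and> j < q then e i j \<in> A else e i j = 0"
  by (rule e_mat[unfolded is_mat_def, rule_format])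
lemma e_in: "i < q \<Longrightarrow> j < q \<Longrightarrow> e i j \<in> A"
  using e_cases[of i j] by simp
lemma e_out: "\<not> (i < q \<and> j < q) \<Longrightarrow> e i j = 0"
  using e_cases[of i j] by simp
lemma e_inA: "e i j \<in> A"
  using e_in e_out A_zero by (cases "i < q \<and> j < q") auto
lemma se_inA: "se i j \<in> A" using sig_in e_inA by blast
lemma se_adj: "i < q \<Longrightarrow> j < q \<Longrightarrow> se i j = adj ip (e j i)" by (rule e_sig[rule_format])

lemma vecsD: "v \<in> vecs q S \<Longrightarrow> j < q \<Longrightarrow> v j \<in> S" unfolding vecs_def by blast
lemma vecsD2: "v \<in> vecs q S \<Longrightarrow> \<not> j < q \<Longrightarrow> v j = 0" unfolding vecs_def by simp
lemma vecsI: "(\<And>j. j < q \<Longrightarrow> v j \<in> S) \<Longrightarrow> (\<And>j. \<not> j < q \<Longrightarrow> v j = 0) \<Longrightarrow> v \<in> vecs q S"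
  unfolding vecs_def by auto

lemma matvec_vecs: "(\<And>i j. M i j \<in> A) \<Longrightarrow> v \<in> vecs q A \<Longrightarrow> matvec q M v \<in> vecs q A"
  by (rule vecsI) (auto simp: matvec_def intro!: A_sum A_comp dest: vecsD)

lemma E_vecs: "\<xi> \<in> E \<Longrightarrow> \<xi> \<in> vecs q A" by (auto intro!: matvec_vecs e_inA)
lemma Esig_vecs: "\<xi> \<in> Esig \<Longrightarrow> \<xi> \<in> vecs q A" by (auto intro!: matvec_vecs se_inA)
lemma vecs_A: "v \<in> vecs q A \<Longrightarrow> v j \<in> A"
  using vecsD[of v A j] vecsD2[of v A j] A_zero by (cases "j < q") auto
lemma E_A: "\<xi> \<in> E \<Longrightarrow> \<xi> j \<in> A" using E_vecs vecs_A by blast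
lemma Esig_A: "\<xi> \<in> Esig \<Longrightarrow> \<xi> j \<in> A" using Esig_vecs vecs_A by blast
lemma E_out: "\<xi> \<in> E \<Longrightarrow> \<not> j < q \<Longrightarrow> \<xi> j = 0" using E_vecs vecsD2 by blast
lemma Esig_out: "\<xi> \<in> Esig \<Longrightarrow> \<not> j < q \<Longrightarrow> \<xi> j = 0" using Esig_vecs vecsD2 by blast

lemma matvec_assoc:
  assumes M: "\<And>i j. lin (M i j)"
  shows "matvec q M (matvec q P v) = matvec q (matmul q M P) v"
proof (rule ext)
  fix i show "matvec q M (matvec q P v) i = matvec q (matmul q M P) v i"
  proof (cases "i < q")
    case True
    have "matvec q M (matvec q P v) i = (\<Sum>j<q. M i j \<circ> (\<Sum>k<q. P j k \<circ> v k))"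
      using True by (simp add: matvec_def)
    also have "\<dots> = (\<Sum>j<q. \<Sum>k<q. M i j \<circ> (P j k \<circ> v k))" by (simp add: lin_comp_sum[OF M])
    also have "\<dots> = (\<Sum>k<q. \<Sum>j<q. (M i j \<circ> P j k) \<circ> v k)" by (subst sum.swap) (simp add: o_assoc)
    also have "\<dots> = (\<Sum>k<q. (\<Sum>j<q. M i j \<circ> P j k) \<circ> v k)" by (simp add: comp_sum_left)
    also have "\<dots> = matvec q (matmul q M P) v i" using True by (simp add: matvec_def matmul_def)
    finally show ?thesis .
  qed (simp add: matvec_def)
qed

lemma E_fix: "\<xi> \<in> E \<Longrightarrow> matvec q e \<xi> = \<xi>"
proof -
  assume "\<xi> \<in> E"
  then obtain x where x: "\<xi> = matvec q e x" by blast
  have "matvec q e (matvec q e x) = matvec q (matmul q e e) x"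
    by (rule matvec_assoc) (rule A_lin[OF e_inA])
  then show ?thesis using x e_idem by simp
qed

lemma E_fix_i: "\<xi> \<in> E \<Longrightarrow> i < q \<Longrightarrow> (\<Sum>j<q. e i j \<circ> \<xi> j) = \<xi> i"
proof -
  assume a: "\<xi> \<in> E" "i < q"
  have "matvec q e \<xi> i = \<xi> i" using E_fix[OF a(1)] by simp
  then show ?thesis using a(2) unfolding matvec_def by simp
qed

lemma zero_comp[simp]: "(0::'z\<Rightarrow>'y::zero) \<circ> f = 0" by (rule ext) simp

lemma matvec_add: "(\<And>i j. lin (M i j)) \<Longrightarrow> matvec q M (v + w) = matvec q M v + matvec q M w"
  by (rule ext) (simp add: matvec_def lin_comp_add sum.distrib)

lemma matvec_rmul: "matvec q M (rmul v a) = rmul (matvec q M v) a"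
  by (rule ext) (simp add: matvec_def rmul_def comp_sum_left o_assoc)

lemma vecs_add: assumes "v \<in> vecs q A" "w \<in> vecs q A" shows "v + w \<in> vecs q A"
proof (rule vecsI)
  show "(v + w) j \<in> A" if "j < q" for j using vecsD[OF assms(1) that] vecsD[OF assms(2) that] by (simp add: A_add)
  show "(v + w) j = 0" if "\<not> j < q" for j using vecsD2[OF assms(1) that] vecsD2[OF assms(2) that] by simp
qed
lemma vecs_rmul: assumes "v \<in> vecs q A" "a \<in> A" shows "rmul v a \<in> vecs q A"
proof (rule vecsI)
  show "rmul v a j \<in> A" if "j < q" for j using vecsD[OF assms(1) that] assms(2) by (simp add: A_comp rmul_def)
  show "rmul v a j = 0" if "\<not> j < q" for j using vecsD2[OF assms(1) that] by (simp add: rmul_def)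
qed

lemma E_add: "\<xi> \<in> E \<Longrightarrow> \<eta> \<in> E \<Longrightarrow> \<xi> + \<eta> \<in> E"
proof -
  assume "\<xi> \<in> E" "\<eta> \<in> E"
  then obtain x y where "\<xi> = matvec q e x" "\<eta> = matvec q e y" "x \<in> vecs q A" "y \<in> vecs q A" by blast
  moreover have "matvec q e (x + y) = matvec q e x + matvec q e y" by (rule matvec_add) (rule A_lin[OF e_inA])
  ultimately have "\<xi> + \<eta> = matvec q e (x + y)" "x + y \<in> vecs q A" using vecs_add by auto
  then show ?thesis by (rule image_eqI)
qed

lemma E_rmul: "\<xi> \<in> E \<Longrightarrow> a \<in> A \<Longrightarrow> rmul \<xi> a \<in> E"
proof -
  assume "\<xi> \<in> E" "a \<in> A"
  then obtain x where "\<xi> = matvec q e x" "x \<in> vecs q A" by blast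
  then have "rmul \<xi> a = matvec q e (rmul x a)" "rmul x a \<in> vecs q A" using matvec_rmul[of e x a] vecs_rmul \<open>a \<in> A\<close> by auto
  then show ?thesis by (rule image_eqI)
qed

lemma rmul_id: "rmul v id = v" unfolding rmul_def by (rule ext) simp

lemma sigE_in: "\<xi> \<in> E \<Longrightarrow> sigvec q sig \<xi> \<in> Esig"
proof -
  assume "\<xi> \<in> E"
  then obtain x where x: "\<xi> = matvec q e x" "x \<in> vecs q A" by blast
  have sx: "sigvec q sig x \<in> vecs q A"
    by (rule vecsI) (auto simp: sigvec_def intro: sig_in vecsD[OF x(2)])
  have "sigvec q sig \<xi> = matvec q se (sigvec q sig x)"
  proof (rule ext)
    fix i show "sigvec q sig \<xi> i = matvec q se (sigvec q sig x) i"
    proof (cases "i < q")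
      case True
      have xk: "x k \<in> A" if "k < q" for k using vecsD[OF x(2) that] .
      have "sigvec q sig \<xi> i = sig (\<Sum>k<q. e i k \<circ> x k)" using True x(1) by (simp add: sigvec_def matvec_def)
      also have "\<dots> = (\<Sum>k<q. sig (e i k \<circ> x k))" by (rule sig_sum) (auto intro: A_comp e_inA xk)
      also have "\<dots> = (\<Sum>k<q. se i k \<circ> sigvec q sig x k)"
        by (rule sum.cong) (auto simp: sigvec_def sig_comp e_inA xk)
      finally show ?thesis using True by (simp add: matvec_def)
    qed (simp add: sigvec_def matvec_def)
  qed
  then show ?thesis using sx by blast
qed

lemma hm_all: "(\<forall>\<xi>\<in>E. \<forall>\<eta>\<in>E. h \<xi> \<eta> \<in> A) \<and>
     (\<forall>\<xi>\<in>E. \<forall>\<eta>\<in>E. \<forall>a\<in>A. \<forall>b\<in>A. h (rmul \<xi> a) (rmul \<eta> b) = adj ip a \<circ> h \<xi> \<eta> \<circ> b) \<and>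
     (\<forall>\<xi>\<in>E. \<forall>\<xi>'\<in>E. \<forall>\<eta>\<in>E. h (\<xi> + \<xi>') \<eta> = h \<xi> \<eta> + h \<xi>' \<eta> \<and> h \<eta> (\<xi> + \<xi>') = h \<eta> \<xi> + h \<eta> \<xi>') \<and>
     (\<forall>\<xi>\<in>E. positive_op scl ip (h \<xi> \<xi>)) \<and>
     (\<forall>\<xi>\<in>E. (\<forall>\<eta>\<in>E. h \<xi> \<eta> = 0) \<longrightarrow> \<xi> = 0)"
  using h_metric unfolding hermitian_metric_def .

lemma h_A: "\<xi> \<in> E \<Longrightarrow> \<eta> \<in> E \<Longrightarrow> h \<xi> \<eta> \<in> A"
  by (rule bspec[OF bspec[OF hm_all[THEN conjunct1]]])
lemma h_ses: "\<xi> \<in> E \<Longrightarrow> \<eta> \<in> E \<Longrightarrow> a \<in> A \<Longrightarrow> b \<in> A \<Longrightarrow> h (rmul \<xi> a) (rmul \<eta> b) = adj ip a \<circ> h \<xi> \<eta> \<circ> b"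
  by (rule bspec[OF bspec[OF bspec[OF bspec[OF hm_all[THEN conjunct2, THEN conjunct1]]]]])
lemma h_add1: "\<xi> \<in> E \<Longrightarrow> \<xi>' \<in> E \<Longrightarrow> \<eta> \<in> E \<Longrightarrow> h (\<xi> + \<xi>') \<eta> = h \<xi> \<eta> + h \<xi>' \<eta>"
  by (rule conjunct1[OF bspec[OF bspec[OF bspec[OF hm_all[THEN conjunct2, THEN conjunct2, THEN conjunct1]]]]])
lemma h_add2: "\<xi> \<in> E \<Longrightarrow> \<xi>' \<in> E \<Longrightarrow> \<eta> \<in> E \<Longrightarrow> h \<eta> (\<xi> + \<xi>') = h \<eta> \<xi> + h \<eta> \<xi>'"
  by (rule conjunct2[OF bspec[OF bspec[OF bspec[OF hm_all[THEN conjunct2, THEN conjunct2, THEN conjunct1]]]]])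
lemma h_pos: "\<xi> \<in> E \<Longrightarrow> positive_op scl ip (h \<xi> \<xi>)"
  by (rule bspec[OF hm_all[THEN conjunct2, THEN conjunct2, THEN conjunct2, THEN conjunct1]])
lemma h_im: "\<xi> \<in> E \<Longrightarrow> Im (ip x (h \<xi> \<xi> x)) = 0"
  by (rule conjunct1[OF spec[OF conjunct2[OF h_pos[unfolded positive_op_def]]]])

lemma h_im2: assumes "\<xi> \<in> E" "\<eta> \<in> E" shows "Im (ip x (h \<xi> \<eta> x)) + Im (ip x (h \<eta> \<xi> x)) = 0"
proof -
  have "h (\<xi> + \<eta>) (\<xi> + \<eta>) = h \<xi> \<xi> + h \<xi> \<eta> + (h \<eta> \<xi> + h \<eta> \<eta>)"
    using assms E_add by (simp add: h_add1 h_add2)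
  then have "Im (ip x (h (\<xi> + \<eta>) (\<xi> + \<eta>) x)) = Im (ip x (h \<xi> \<xi> x)) + Im (ip x (h \<xi> \<eta> x)) + (Im (ip x (h \<eta> \<xi> x)) + Im (ip x (h \<eta> \<eta> x)))"
    by (simp add: ip_add_right)
  then show ?thesis using h_im[of "\<xi> + \<eta>" x] h_im[of \<xi> x] h_im[of \<eta> x] assms E_add by simp
qed

lemma adj_osc_id: "adj ip (osc scl c id) = osc scl (cnj c) id"
  by (rule adj_eq) (rule adjrel_osc[OF adjrel_id])
lemma adj_id: "adj ip id = id" by (rule adj_eq[OF adjrel_id])
lemma osc_id_A: "osc scl c id \<in> A" by (rule A_osc[OF A_id])

lemma h_sym: assumes xi: "\<xi> \<in> E" and eta: "\<eta> \<in> E" shows "adjrel (h \<xi> \<eta>) (h \<eta> \<xi>)"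
proof (rule polar)
  define T where "T = h \<xi> \<eta>"
  define U where "U = h \<eta> \<xi>"
  show lT: "lin (h \<xi> \<eta>)" using A_lin h_A xi eta by blast
  show lU: "lin (h \<eta> \<xi>)" using A_lin h_A xi eta by blast
  fix x
  define \<xi>' where "\<xi>' = rmul \<xi> (osc scl \<i> id)"
  have xi': "\<xi>' \<in> E" unfolding \<xi>'_def using E_rmul xi osc_id_A by blast
  have h1: "h \<xi>' \<eta> = osc scl (- \<i>) id \<circ> h \<xi> \<eta> \<circ> id"
    using h_ses[OF xi eta osc_id_A A_id, of \<i>] unfolding \<xi>'_def rmul_id adj_osc_id by simp
  have h2: "h \<eta> \<xi>' = id \<circ> h \<eta> \<xi> \<circ> osc scl \<i> id"
    using h_ses[OF eta xi A_id osc_id_A, of \<i>] unfolding \<xi>'_def rmul_id adj_id by simp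
  define \<alpha> where "\<alpha> = ip x (h \<xi> \<eta> x)"
  define \<beta> where "\<beta> = ip x (h \<eta> \<xi> x)"
  have i1: "Im \<alpha> + Im \<beta> = 0" unfolding \<alpha>_def \<beta>_def by (rule h_im2[OF xi eta])
  have "Im (ip x (h \<xi>' \<eta> x)) + Im (ip x (h \<eta> \<xi>' x)) = 0" by (rule h_im2[OF xi' eta])
  moreover have "ip x (h \<xi>' \<eta> x) = - \<i> * \<alpha>" unfolding h1 \<alpha>_def by (simp add: osc_def ip_scl_right ip_minus_right)
  moreover have "ip x (h \<eta> \<xi>' x) = \<i> * \<beta>" unfolding h2 \<beta>_def by (simp add: osc_def ip_scl_right lin_scl[OF lU])
  ultimately have i2: "Re \<beta> - Re \<alpha> = 0" by simp
  have "\<beta> = cnj \<alpha>" using i1 i2 by (simp add: complex_eq_iff)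
  then show "ip x (h \<eta> \<xi> x) = ip (h \<xi> \<eta> x) x" unfolding \<alpha>_def \<beta>_def by (simp add: ip_sym[of x])
qed

lemma s_bij: "bij_betw s Esig E" using s_iso unfolding module_iso_def by (rule conjunct1)
lemma s_in: "\<eta> \<in> Esig \<Longrightarrow> s \<eta> \<in> E" by (rule bij_betw_apply[OF s_bij])
lemma s_metric: "\<eta> \<in> Esig \<Longrightarrow> \<xi> \<in> E \<Longrightarrow> h (s \<eta>) \<xi> = metric0 q ip \<eta> \<xi>"
  by (rule bspec[OF bspec[OF s_prop]])

lemma metric0_adjrel: "(\<And>j. \<xi> j \<in> A) \<Longrightarrow> (\<And>j. \<eta> j \<in> A) \<Longrightarrow> adjrel (metric0 q ip \<eta> \<xi>) (metric0 q ip \<xi> \<eta>)"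
  unfolding metric0_def
  by (intro adjrel_sum adjrel_comp adjrel_sym[OF A_adjrel] A_adjrel) auto

lemma h_s: assumes xi: "\<xi> \<in> E" and eta: "\<eta> \<in> Esig" shows "h \<xi> (s \<eta>) = metric0 q ip \<xi> \<eta>"
proof -
  have "adj ip (h (s \<eta>) \<xi>) = h \<xi> (s \<eta>)" by (rule adj_eq[OF h_sym[OF s_in[OF eta] xi]])
  moreover have "adj ip (h (s \<eta>) \<xi>) = metric0 q ip \<xi> \<eta>"
    unfolding s_metric[OF eta xi] by (rule adj_eq[OF metric0_adjrel]) (auto intro: E_A[OF xi] Esig_A[OF eta])
  ultimately show ?thesis by simp
qed

lemma part1: "sigma_hermitian_structure scl ip A sig E Esig (sigvec q sig) h s"
  unfolding sigma_hermitian_structure_def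
proof (intro conjI ballI)
  show "hermitian_metric scl ip A E h" by (rule h_metric)
  show "module_iso A Esig E s" by (rule s_iso)
  fix \<xi>1 \<xi>2 assume x1: "\<xi>1 \<in> E" and x2: "\<xi>2 \<in> E"
  have "h \<xi>1 (s (sigvec q sig \<xi>2)) = metric0 q ip \<xi>1 (sigvec q sig \<xi>2)"
    by (rule h_s[OF x1 sigE_in[OF x2]])
  also have "\<dots> = (\<Sum>j<q. adj ip (\<xi>1 j) \<circ> sig (\<xi>2 j))" unfolding metric0_def sigvec_def by simp
  also have "\<dots> = (\<Sum>j<q. sig (adj ip (sig (\<xi>1 j)) \<circ> \<xi>2 j))"
    by (rule sum.cong) (auto simp: sig_comp sig_adj_sig E_A[OF x1] E_A[OF x2] A_adjA sig_in)
  also have "\<dots> = sig (\<Sum>j<q. adj ip (sig (\<xi>1 j)) \<circ> \<xi>2 j)"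
    by (rule sig_sum[symmetric]) (auto intro: A_comp A_adjA sig_in E_A[OF x1] E_A[OF x2])
  also have "\<dots> = sig (metric0 q ip (sigvec q sig \<xi>1) \<xi>2)" unfolding metric0_def sigvec_def by simp
  also have "\<dots> = sig (h (s (sigvec q sig \<xi>1)) \<xi>2)" using s_metric[OF sigE_in[OF x1] x2] by simp
  finally show "h \<xi>1 (s (sigvec q sig \<xi>2)) = sig (h (s (sigvec q sig \<xi>1)) \<xi>2)" .
qed


lemma osc_sum: "osc scl c (\<Sum>k\<in>K. f k) = (\<Sum>k\<in>K. osc scl c (f k))"
  unfolding osc_def by (rule ext) (simp add: fun_sum_apply scale_sum_right)

definition nab :: "(nat \<Rightarrow> 'a \<Rightarrow> 'a) \<Rightarrow> (nat \<Rightarrow> 'a \<Rightarrow> 'a)" where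
  "nab = (\<lambda>\<xi>. matvec q (\<lambda>i j. sig (e i j)) (\<lambda>j. if j < q then d (\<xi> j) else 0))"

lemma nab_in: "i < q \<Longrightarrow> nab \<xi> i = (\<Sum>k<q. se i k \<circ> d (\<xi> k))"
  unfolding nab_def matvec_def by (auto intro: sum.cong)
lemma nab_out: "\<not> i < q \<Longrightarrow> nab \<xi> i = 0"
  unfolding nab_def matvec_def by simp

lemma se_lin: "lin (se i j)" by (rule A_lin[OF se_inA])

lemma part2: "sigma_connection scl A (d) E (matvec q se ` vecs q (Omega1 scl A (d))) (sigvec q sig) nab"
  unfolding sigma_connection_def
proof (intro conjI ballI allI)
  fix \<xi> assume xi: "\<xi> \<in> E"
  have "(\<lambda>j. if j < q then d (\<xi> j) else 0) \<in> vecs q (Omega1 scl A (d))"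
    by (rule vecsI) (auto intro: Omega1_d E_A[OF xi])
  then show "nab \<xi> \<in> matvec q se ` vecs q (Omega1 scl A (d))" unfolding nab_def by (rule imageI)
next
  fix \<xi> \<eta> assume xi: "\<xi> \<in> E" and eta: "\<eta> \<in> E"
  have "(\<lambda>j. if j < q then d ((\<xi> + \<eta>) j) else 0) = (\<lambda>j. if j < q then d (\<xi> j) else 0) + (\<lambda>j. if j < q then d (\<eta> j) else 0)"
    by (rule ext) (simp add: d_add E_A[OF xi] E_A[OF eta])
  then show "nab (\<xi> + \<eta>) = nab \<xi> + nab \<eta>" unfolding nab_def by (simp add: matvec_add se_lin)
next
  fix c \<xi> assume xi: "\<xi> \<in> E"
  show "nab (\<lambda>j. osc scl c (\<xi> j)) = (\<lambda>j. osc scl c (nab \<xi> j))"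
  proof (rule ext)
    fix i show "nab (\<lambda>j. osc scl c (\<xi> j)) i = osc scl c (nab \<xi> i)"
    proof (cases "i < q")
      case True
      have "nab (\<lambda>j. osc scl c (\<xi> j)) i = (\<Sum>k<q. se i k \<circ> osc scl c (d (\<xi> k)))"
        unfolding nab_in[OF True] by (simp add: d_osc E_A[OF xi])
      also have "\<dots> = (\<Sum>k<q. osc scl c (se i k \<circ> d (\<xi> k)))"
        by (rule sum.cong) (auto simp: osc_def fun_eq_iff lin_scl[OF se_lin])
      also have "\<dots> = osc scl c (nab \<xi> i)" unfolding nab_in[OF True] by (rule osc_sum[symmetric])
      finally show ?thesis .
    next
      case False then show ?thesis by (simp add: nab_out osc_def fun_eq_iff)
    qed
  qed
next
  fix \<xi> a assume xi: "\<xi> \<in> E" and a: "a \<in> A"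
  show "nab (rmul \<xi> a) = rmul (nab \<xi>) a + (\<lambda>j. sigvec q sig \<xi> j \<circ> d a)"
  proof (rule ext)
    fix i show "nab (rmul \<xi> a) i = (rmul (nab \<xi>) a + (\<lambda>j. sigvec q sig \<xi> j \<circ> d a)) i"
    proof (cases "i < q")
      case True
      have "nab (rmul \<xi> a) i = (\<Sum>k<q. se i k \<circ> ((sig (\<xi> k) \<circ> d a) + (d (\<xi> k) \<circ> a)))"
        unfolding nab_in[OF True] rmul_def by (simp add: d_comp E_A[OF xi] a)
      also have "\<dots> = (\<Sum>k<q. (sig (e i k \<circ> \<xi> k) \<circ> d a) + ((se i k \<circ> d (\<xi> k)) \<circ> a))"
        by (rule sum.cong) (auto simp: lin_comp_add[OF se_lin] o_assoc sig_comp e_inA E_A[OF xi])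
      also have "\<dots> = ((\<Sum>k<q. sig (e i k \<circ> \<xi> k)) \<circ> d a) + ((\<Sum>k<q. se i k \<circ> d (\<xi> k)) \<circ> a)"
        by (simp add: sum.distrib comp_sum_left)
      finally have L: "nab (rmul \<xi> a) i = ((\<Sum>k<q. sig (e i k \<circ> \<xi> k)) \<circ> d a) + ((\<Sum>k<q. se i k \<circ> d (\<xi> k)) \<circ> a)" .
      have "(\<Sum>k<q. sig (e i k \<circ> \<xi> k)) = sig (\<Sum>k<q. e i k \<circ> \<xi> k)"
        by (rule sig_sum[symmetric]) (simp add: A_comp e_inA E_A[OF xi])
      also have "\<dots> = sig (\<xi> i)" using E_fix_i[OF xi True] by simp
      finally have S: "(\<Sum>k<q. sig (e i k \<circ> \<xi> k)) = sig (\<xi> i)" .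
      show ?thesis unfolding L S using True by (simp add: nab_in rmul_def sigvec_def add.commute)
    next
      case False then show ?thesis by (simp add: nab_out rmul_def sigvec_def)
    qed
  qed
qed

lemma decompD:
  assumes "decomp Esig (Omega1 scl A (d)) v ps"
  shows "\<And>p. p \<in> set ps \<Longrightarrow> fst p \<in> Esig \<and> snd p \<in> Omega1 scl A (d)"
    and "\<And>j. v j = sum_list (map (\<lambda>p. fst p j \<circ> snd p) ps)"
proof -
  have c1: "\<forall>(\<eta>, \<omega>)\<in>set ps. \<eta> \<in> Esig \<and> \<omega> \<in> Omega1 scl A (d)"
    using assms unfolding decomp_def by (rule conjunct1)
  have v: "v = sum_list (map (\<lambda>(\<eta>, \<omega>). rmul \<eta> \<omega>) ps)"
    using assms unfolding decomp_def by (rule conjunct2)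
  show "fst p \<in> Esig \<and> snd p \<in> Omega1 scl A (d)" if "p \<in> set ps" for p
    using bspec[OF c1 that] by (simp add: split_def)
  show "v j = sum_list (map (\<lambda>p. fst p j \<circ> snd p) ps)" for j
    unfolding v fun_sum_list_apply by (simp add: rmul_def split_def comp_def)
qed

lemma C1:
  assumes xi: "\<xi> \<in> E" and dq: "decomp Esig (Omega1 scl A (d)) (nab \<eta>) qs"
  shows "sum_list (map (\<lambda>(\<eta>b, \<psi>). h \<xi> (s \<eta>b) \<circ> \<psi>) qs) = (\<Sum>j<q. adj ip (\<xi> j) \<circ> nab \<eta> j)"
proof -
  have lx: "lin (adj ip (\<xi> j))" for j by (rule adjrel_lin[OF A_adjrel[OF E_A[OF xi]]])
  have "map (\<lambda>(\<eta>b, \<psi>). h \<xi> (s \<eta>b) \<circ> \<psi>) qs = map (\<lambda>p. \<Sum>j<q. adj ip (\<xi> j) \<circ> (fst p j \<circ> snd p)) qs"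
  proof (rule map_cong[OF refl])
    fix p assume p: "p \<in> set qs"
    have "fst p \<in> Esig" using decompD(1)[OF dq p] by blast
    then have "h \<xi> (s (fst p)) = metric0 q ip \<xi> (fst p)" by (rule h_s[OF xi])
    then show "(\<lambda>(\<eta>b, \<psi>). h \<xi> (s \<eta>b) \<circ> \<psi>) p = (\<Sum>j<q. adj ip (\<xi> j) \<circ> (fst p j \<circ> snd p))"
      by (simp add: split_def metric0_def comp_sum_left o_assoc)
  qed
  then have "sum_list (map (\<lambda>(\<eta>b, \<psi>). h \<xi> (s \<eta>b) \<circ> \<psi>) qs) = sum_list (map (\<lambda>p. \<Sum>j<q. adj ip (\<xi> j) \<circ> (fst p j \<circ> snd p)) qs)"
    by (rule arg_cong[where f = sum_list])
  also have "\<dots> = (\<Sum>j<q. sum_list (map (\<lambda>p. adj ip (\<xi> j) \<circ> (fst p j \<circ> snd p)) qs))"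
    by (rule sum_list_sum_swap)
  also have "\<dots> = (\<Sum>j<q. adj ip (\<xi> j) \<circ> sum_list (map (\<lambda>p. fst p j \<circ> snd p) qs))"
    by (simp add: lin_comp_sum_list[OF lx])
  also have "\<dots> = (\<Sum>j<q. adj ip (\<xi> j) \<circ> nab \<eta> j)" by (simp add: decompD(2)[OF dq])
  finally show ?thesis .
qed

lemma C2:
  assumes eta: "\<eta> \<in> E" and dp: "decomp Esig (Omega1 scl A (d)) (nab \<xi>) ps"
  shows "sum_list (map (\<lambda>(\<xi>a, \<omega>). adj ip \<omega> \<circ> h (s \<xi>a) \<eta>) ps) = (\<Sum>j<q. adj ip (nab \<xi> j) \<circ> \<eta> j)"
proof -
  have "map (\<lambda>(\<xi>a, \<omega>). adj ip \<omega> \<circ> h (s \<xi>a) \<eta>) ps = map (\<lambda>p. \<Sum>j<q. adj ip (fst p j \<circ> snd p) \<circ> \<eta> j) ps"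
  proof (rule map_cong[OF refl])
    fix p assume p: "p \<in> set ps"
    have fp: "fst p \<in> Esig" and sp: "snd p \<in> Omega1 scl A (d)" using decompD(1)[OF dp p] by auto
    have ar: "adjrel (snd p) (adj ip (snd p))" by (rule bnd_adjrel[OF Omega1_bnd[OF sp]])
    have lw: "lin (adj ip (snd p))" by (rule adjrel_lin[OF ar])
    have "adj ip (snd p) \<circ> h (s (fst p)) \<eta> = adj ip (snd p) \<circ> (\<Sum>j<q. adj ip (fst p j) \<circ> \<eta> j)"
      using s_metric[OF fp eta] by (simp add: metric0_def)
    also have "\<dots> = (\<Sum>j<q. adj ip (snd p) \<circ> (adj ip (fst p j) \<circ> \<eta> j))" by (rule lin_comp_sum[OF lw])
    also have "\<dots> = (\<Sum>j<q. adj ip (fst p j \<circ> snd p) \<circ> \<eta> j)"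
      by (rule sum.cong) (auto simp: adj_comp[OF A_adjrel[OF Esig_A[OF fp]] ar] o_assoc)
    finally show "(\<lambda>(\<xi>a, \<omega>). adj ip \<omega> \<circ> h (s \<xi>a) \<eta>) p = (\<Sum>j<q. adj ip (fst p j \<circ> snd p) \<circ> \<eta> j)"
      by (simp add: split_def)
  qed
  then have "sum_list (map (\<lambda>(\<xi>a, \<omega>). adj ip \<omega> \<circ> h (s \<xi>a) \<eta>) ps) = sum_list (map (\<lambda>p. \<Sum>j<q. adj ip (fst p j \<circ> snd p) \<circ> \<eta> j) ps)"
    by (rule arg_cong[where f = sum_list])
  also have "\<dots> = (\<Sum>j<q. sum_list (map (\<lambda>p. adj ip (fst p j \<circ> snd p) \<circ> \<eta> j) ps))"
    by (rule sum_list_sum_swap)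
  also have "\<dots> = (\<Sum>j<q. sum_list (map (\<lambda>p. adj ip (fst p j \<circ> snd p)) ps) \<circ> \<eta> j)"
    by (simp add: comp_sum_list_left)
  also have "\<dots> = (\<Sum>j<q. adj ip (nab \<xi> j) \<circ> \<eta> j)"
  proof (rule sum.cong[OF refl])
    fix j
    have "adjrel (fst p j \<circ> snd p) (adj ip (fst p j \<circ> snd p))" if "p \<in> set ps" for p
    proof -
      have fp: "fst p \<in> Esig" and sp: "snd p \<in> Omega1 scl A (d)" using decompD(1)[OF dp that] by auto
      show ?thesis by (rule bnd_adjrel[OF bnd_comp[OF A_bnd[OF Esig_A[OF fp]] Omega1_bnd[OF sp]]])
    qed
    then have "adjrel (sum_list (map (\<lambda>p. fst p j \<circ> snd p) ps)) (sum_list (map (\<lambda>p. adj ip (fst p j \<circ> snd p)) ps))"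
      by (rule adjrel_sum_list)
    then have "adj ip (nab \<xi> j) = sum_list (map (\<lambda>p. adj ip (fst p j \<circ> snd p)) ps)"
      unfolding decompD(2)[OF dp] by (rule adj_eq)
    then show "sum_list (map (\<lambda>p. adj ip (fst p j \<circ> snd p)) ps) \<circ> \<eta> j = adj ip (nab \<xi> j) \<circ> \<eta> j" by simp
  qed
  finally show ?thesis .
qed

lemma adj_xi: assumes xi: "\<xi> \<in> E" and k: "k < q" shows "adj ip (\<xi> k) = (\<Sum>j<q. adj ip (\<xi> j) \<circ> se j k)"
proof -
  have "adjrel (\<Sum>j<q. e k j \<circ> \<xi> j) (\<Sum>j<q. adj ip (\<xi> j) \<circ> se j k)"
  proof (rule adjrel_sum)
    fix j assume j: "j \<in> {..<q}"
    have "se j k = adj ip (e k j)" using se_adj j k by simp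
    then show "adjrel (e k j \<circ> \<xi> j) (adj ip (\<xi> j) \<circ> se j k)"
      using adjrel_comp[OF A_adjrel[OF e_inA] A_adjrel[OF E_A[OF xi]], of k j j] by simp
  qed
  then have "adj ip (\<Sum>j<q. e k j \<circ> \<xi> j) = (\<Sum>j<q. adj ip (\<xi> j) \<circ> se j k)" by (rule adj_eq)
  then show ?thesis unfolding E_fix_i[OF xi k] .
qed

lemma C3:
  assumes xi: "\<xi> \<in> E" and eta: "\<eta> \<in> E"
  shows "(\<Sum>j<q. adj ip (\<xi> j) \<circ> nab \<eta> j) = (\<Sum>k<q. adj ip (\<xi> k) \<circ> d (\<eta> k))"
proof -
  have lx: "lin (adj ip (\<xi> j))" for j by (rule adjrel_lin[OF A_adjrel[OF E_A[OF xi]]])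
  have "(\<Sum>j<q. adj ip (\<xi> j) \<circ> nab \<eta> j) = (\<Sum>j<q. \<Sum>k<q. adj ip (\<xi> j) \<circ> (se j k \<circ> d (\<eta> k)))"
    by (rule sum.cong) (auto simp: nab_in lin_comp_sum[OF lx])
  also have "\<dots> = (\<Sum>k<q. \<Sum>j<q. (adj ip (\<xi> j) \<circ> se j k) \<circ> d (\<eta> k))"
    by (subst sum.swap) (simp add: o_assoc)
  also have "\<dots> = (\<Sum>k<q. (\<Sum>j<q. adj ip (\<xi> j) \<circ> se j k) \<circ> d (\<eta> k))"
    by (simp add: comp_sum_left)
  also have "\<dots> = (\<Sum>k<q. adj ip (\<xi> k) \<circ> d (\<eta> k))"
    by (rule sum.cong) (simp_all add: adj_xi[OF xi, symmetric])
  finally show ?thesis .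
qed

lemma C4:
  assumes xi: "\<xi> \<in> E" and eta: "\<eta> \<in> E"
  shows "(\<Sum>j<q. adj ip (nab \<xi> j) \<circ> \<eta> j) = (\<Sum>k<q. adj ip (d (\<xi> k)) \<circ> \<eta> k)"
proof -
  have ad: "adjrel (d (\<xi> k)) (adj ip (d (\<xi> k)))" for k by (rule bnd_adjrel[OF d_char(1)[OF E_A[OF xi]]])
  have ld: "lin (adj ip (d (\<xi> k)))" for k by (rule adjrel_lin[OF ad])
  have an: "adj ip (nab \<xi> j) = (\<Sum>k<q. adj ip (d (\<xi> k)) \<circ> e k j)" if j: "j < q" for j
  proof -
    have "adjrel (\<Sum>k<q. se j k \<circ> d (\<xi> k)) (\<Sum>k<q. adj ip (d (\<xi> k)) \<circ> e k j)"
    proof (rule adjrel_sum)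
      fix k assume k: "k \<in> {..<q}"
      have "se j k = adj ip (e k j)" using se_adj j k by simp
      then have "adjrel (se j k) (e k j)" using adjrel_sym[OF A_adjrel[OF e_inA]] by simp
      then show "adjrel (se j k \<circ> d (\<xi> k)) (adj ip (d (\<xi> k)) \<circ> e k j)" by (rule adjrel_comp[OF _ ad])
    qed
    then show ?thesis unfolding nab_in[OF j] by (rule adj_eq)
  qed
  have "(\<Sum>j<q. adj ip (nab \<xi> j) \<circ> \<eta> j) = (\<Sum>j<q. \<Sum>k<q. adj ip (d (\<xi> k)) \<circ> (e k j \<circ> \<eta> j))"
    by (rule sum.cong) (auto simp: an comp_sum_left o_assoc)
  also have "\<dots> = (\<Sum>k<q. adj ip (d (\<xi> k)) \<circ> (\<Sum>j<q. e k j \<circ> \<eta> j))"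
    by (subst sum.swap) (simp add: lin_comp_sum[OF ld])
  also have "\<dots> = (\<Sum>k<q. adj ip (d (\<xi> k)) \<circ> \<eta> k)"
    by (rule sum.cong) (auto simp: E_fix_i[OF eta])
  finally show ?thesis .
qed

lemma C5:
  assumes xi: "\<xi> \<in> E" and eta: "\<eta> \<in> E"
  shows "d (h (s (sigvec q sig \<xi>)) \<eta>) = (\<Sum>k<q. adj ip (\<xi> k) \<circ> d (\<eta> k)) - (\<Sum>k<q. adj ip (d (\<xi> k)) \<circ> \<eta> k)"
proof -
  have in1: "adj ip (sig (\<xi> k)) \<in> A" for k by (intro A_adjA sig_in E_A[OF xi])
  have "h (s (sigvec q sig \<xi>)) \<eta> = (\<Sum>k<q. adj ip (sigvec q sig \<xi> k) \<circ> \<eta> k)"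
    using s_metric[OF sigE_in[OF xi] eta] unfolding metric0_def .
  also have "\<dots> = (\<Sum>k<q. adj ip (sig (\<xi> k)) \<circ> \<eta> k)" by (simp add: sigvec_def)
  finally have "h (s (sigvec q sig \<xi>)) \<eta> = (\<Sum>k<q. adj ip (sig (\<xi> k)) \<circ> \<eta> k)" .
  then have "d (h (s (sigvec q sig \<xi>)) \<eta>) = (\<Sum>k<q. d (adj ip (sig (\<xi> k)) \<circ> \<eta> k))"
    by (simp add: d_sum A_comp in1 E_A[OF eta])
  also have "\<dots> = (\<Sum>k<q. (adj ip (\<xi> k) \<circ> d (\<eta> k)) - (adj ip (d (\<xi> k)) \<circ> \<eta> k))"
  proof (rule sum.cong[OF refl])
    fix k
    have "d (adj ip (sig (\<xi> k))) = - adj ip (d (\<xi> k))" using d_adj_eq[OF E_A[OF xi]] by simp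
    then show "d (adj ip (sig (\<xi> k)) \<circ> \<eta> k) = (adj ip (\<xi> k) \<circ> d (\<eta> k)) - (adj ip (d (\<xi> k)) \<circ> \<eta> k)"
      by (simp add: d_comp[OF in1 E_A[OF eta]] sig_adj_sig[OF E_A[OF xi]] comp_uminus_left)
  qed
  also have "\<dots> = (\<Sum>k<q. adj ip (\<xi> k) \<circ> d (\<eta> k)) - (\<Sum>k<q. adj ip (d (\<xi> k)) \<circ> \<eta> k)"
    by (rule sum_subtractf)
  finally show ?thesis .
qed

lemma part3: "sigma_hermitian_connection ip (d) (Omega1 scl A (d)) E Esig (sigvec q sig) h s nab"
  unfolding sigma_hermitian_connection_def
proof (intro ballI allI impI)
  fix \<xi> \<eta> ps qs assume xi: "\<xi> \<in> E" and eta: "\<eta> \<in> E"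
    and dp: "decomp Esig (Omega1 scl A (d)) (nab \<xi>) ps" and dq: "decomp Esig (Omega1 scl A (d)) (nab \<eta>) qs"
  show "sum_list (map (\<lambda>(\<eta>b, \<psi>). h \<xi> (s \<eta>b) \<circ> \<psi>) qs) - sum_list (map (\<lambda>(\<xi>a, \<omega>). adj ip \<omega> \<circ> h (s \<xi>a) \<eta>) ps)
        = d (h (s (sigvec q sig \<xi>)) \<eta>)"
    unfolding C1[OF xi dq] C3[OF xi eta] C2[OF eta dp] C4[OF xi eta] C5[OF xi eta] by (rule refl)
qed

end


theorem lemma6p2:
  fixes scl :: "complex \<Rightarrow> 'h::ab_group_add \<Rightarrow> 'h"
    and ip :: "'h \<Rightarrow> 'h \<Rightarrow> complex"
    and gam D :: "'h \<Rightarrow> 'h" and domD :: "'h set"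
    and A :: "('h \<Rightarrow> 'h) set" and sig :: "('h \<Rightarrow> 'h) \<Rightarrow> ('h \<Rightarrow> 'h)"
    and q :: nat and e :: "nat \<Rightarrow> nat \<Rightarrow> 'h \<Rightarrow> 'h"
    and h :: "(nat \<Rightarrow> 'h \<Rightarrow> 'h) \<Rightarrow> (nat \<Rightarrow> 'h \<Rightarrow> 'h) \<Rightarrow> ('h \<Rightarrow> 'h)"
    and s :: "(nat \<Rightarrow> 'h \<Rightarrow> 'h) \<Rightarrow> (nat \<Rightarrow> 'h \<Rightarrow> 'h)"
  defines "E \<equiv> matvec q e ` vecs q A"
    and "Esig \<equiv> matvec q (\<lambda>i j. sig (e i j)) ` vecs q A"
    and "sigE \<equiv> sigvec q sig"
    and "nabla0 \<equiv> (\<lambda>\<xi>. matvec q (\<lambda>i j. sig (e i j)) (\<lambda>j. if j < q then dsig scl ip sig domD D (\<xi> j) else 0))"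
  assumes tst: "twisted_spectral_triple scl ip gam A sig domD D"
    and e_mat: "is_mat q A e"
    and e_idem: "matmul q e e = e"
    and e_sig: "\<forall>i<q. \<forall>j<q. sig (e i j) = adj ip (e j i)"
    and h_metric: "hermitian_metric scl ip A E h"
    and s_iso: "module_iso A Esig E s"
    and s_prop: "\<forall>\<eta>\<in>Esig. \<forall>\<xi>\<in>E. h (s \<eta>) \<xi> = metric0 q ip \<eta> \<xi>"
  shows "sigma_hermitian_structure scl ip A sig E Esig sigE h s \<and>
         sigma_connection scl A (dsig scl ip sig domD D) E
           (matvec q (\<lambda>i j. sig (e i j)) ` vecs q (Omega1 scl A (dsig scl ip sig domD D))) sigE nabla0 \<and>
         sigma_hermitian_connection ip (dsig scl ip sig domD D)
           (Omega1 scl A (dsig scl ip sig domD D)) E Esig sigE h s nabla0"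
proof -
  have dE: "E = matvec q e ` vecs q A" and dEs: "Esig = matvec q (\<lambda>i j. sig (e i j)) ` vecs q A"
    and dS: "sigE = sigvec q sig"
    and dN: "nabla0 = (\<lambda>\<xi>. matvec q (\<lambda>i j. sig (e i j)) (\<lambda>j. if j < q then dsig scl ip sig domD D (\<xi> j) else 0))"
    using assms(1-4) by simp_all
  note hm = h_metric[unfolded dE]
  note si = s_iso[unfolded dE dEs]
  note sp = s_prop[unfolded dE dEs]
  interpret g: gr scl ip gam A sig domD D q e h s
    by (unfold_locales; (rule tst e_mat e_idem e_sig hm si sp))
  have 1: "sigma_hermitian_structure scl ip A sig (matvec q e ` vecs q A) (matvec q (\<lambda>i j. sig (e i j)) ` vecs q A) (sigvec q sig) h s"
    by (rule g.part1)
  have 2: "sigma_connection scl A (dsig scl ip sig domD D) (matvec q e ` vecs q A)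
           (matvec q (\<lambda>i j. sig (e i j)) ` vecs q (Omega1 scl A (dsig scl ip sig domD D))) (sigvec q sig)
           (\<lambda>\<xi>. matvec q (\<lambda>i j. sig (e i j)) (\<lambda>j. if j < q then dsig scl ip sig domD D (\<xi> j) else 0))"
    using g.part2 unfolding g.nab_def .
  have 3: "sigma_hermitian_connection ip (dsig scl ip sig domD D)
           (Omega1 scl A (dsig scl ip sig domD D)) (matvec q e ` vecs q A) (matvec q (\<lambda>i j. sig (e i j)) ` vecs q A) (sigvec q sig) h s
           (\<lambda>\<xi>. matvec q (\<lambda>i j. sig (e i j)) (\<lambda>j. if j < q then dsig scl ip sig domD D (\<xi> j) else 0))"
    using g.part3 unfolding g.nab_def .
  show ?thesis unfolding dE dEs dS dN using 1 2 3 by (intro conjI)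
qed

end
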